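(* Let $X$ be an $\mathbb R^2$-valued OFBF on $\mathbb R^m$ satisfying the standing eigenvalue assumption and condition (NS). Then: (i) if $G^{\mathrm{ran}}_1(X)$ is conjugate to $\mathcal D_2$, then $-I\in G^{\mathrm{dom}}_1(X)$; (ii) if $G^{\mathrm{ran}}_1(X)$ is conjugate to $SO(2)$, then $-I\notin G^{\mathrm{dom}}_1(X)$; (iii) if $G^{\mathrm{ran}}_1(X)$ is conjugate to $O(2)$, then $-I\in G^{\mathrm{dom}}_1(X)$.
   Context: OFBF: an $\mathbb R^n$-valued field $X=\{X(t)\}_{t\in\mathbb R^m}$, proper ($X(t)$ not supported on a lower-dimensional hyperplane for $t\ne0$), nondegenerate (no projection $P\ne I$ with $X(t)=X(Pt)$ for all $t$), stochastically continuous, mean-zero Gaussian, stationary increments, and $\{X(c^Et)\}\overset{\mathcal L}=\{c^HX(t)\}$ for all $c>0$, $c^M=\exp(M\log c)$. Standing eigenvalue assumption: $0<\min\Re\,\mathrm{eig}(H)\le\max\Re\,\mathrm{eig}(H)<\min\Re\,\mathrm{eig}(E^* )=1$; then $X$ has harmonizable representation $X(t)\overset{\mathcal L}=\int(e^{i\langle t,x\rangle}-1)\widetilde B_F(dx)$ with Hermitian Gaussian random measure of control (spectral) measure $F_X$. Condition (NS): for every Borel $B$, $\max\mathrm{eig}F_X(B)>0$ (possibly $\infty$) implies $\min\mathrm{eig}F_X(B)>0$. $G^{\mathrm{dom}}_1(X)=\{A\in GL(m,\mathbb R):\{X(At)\}\overset{\mathcal L}=\{X(t)\}\}$, $G^{\mathrm{ran}}_1(X)=\{B\in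 GL(2,\mathbb R):\{BX(t)\}\overset{\mathcal L}=\{X(t)\}\}$. "Conjugate to $\mathcal O$" means equal to $W\mathcal OW^{-1}$ for some symmetric positive definite $W$. $\mathcal D_2=\{\pm I,\pm\mathrm{diag}(1,-1)\}$. *)

theory Defs
  imports "HOL-Analysis.Analysis" "HOL-Probability.Probability"
begin

primrec mpow :: "real^'n^'n \<Rightarrow> nat \<Rightarrow> real^'n^'n" where
  "mpow A 0 = mat 1"
| "mpow A (Suc k) = A ** mpow A k"

definition mexp :: "real^'n^'n \<Rightarrow> real^'n^'n" where
  "mexp A = (\<Sum>k. (1 / fact k) *\<^sub>R mpow A k)"

definition opow :: "real \<Rightarrow> real^'n^'n \<Rightarrow> real^'n^'n" where
  "opow c A = mexp (ln c *\<^sub>R A)"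

definition cmat :: "real^'n^'n \<Rightarrow> complex^'n^'n" where
  "cmat A = (\<chi> i j. complex_of_real (A $ i $ j))"

definition eigs :: "real^'n^'n \<Rightarrow> complex set" where
  "eigs A = {l. det (cmat A - mat l) = 0}"

definition sym_posdef :: "real^'n^'n \<Rightarrow> bool" where
  "sym_posdef W \<longleftrightarrow> transpose W = W \<and> (\<forall>x. x \<noteq> 0 \<longrightarrow> x \<bullet> (W *v x) > 0)"

definition GL :: "(real^'n^'n) set" where
  "GL = {A. invertible A}"

definition O2 :: "(real^2^2) set" where
  "O2 = {A. transpose A ** A = mat 1}"

definition SO2 :: "(real^2^2) set" where
  "SO2 = {A. transpose A ** A = mat 1 \<and> det A = 1}"

definition diag2 :: "real \<Rightarrow> real \<Rightarrow> real^2^2" where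
  "diag2 a b = (\<chi> i j. if i = j then (if i = 1 then a else b) else 0)"

definition D2 :: "(real^2^2) set" where
  "D2 = {mat 1, - mat 1, diag2 1 (-1), - diag2 1 (-1)}"

definition conj_to :: "(real^'n^'n) set \<Rightarrow> (real^'n^'n) set \<Rightarrow> bool" where
  "conj_to G S \<longleftrightarrow> (\<exists>W. sym_posdef W \<and> G = (\<lambda>Q. W ** Q ** matrix_inv W) ` S)"

definition eq_law ::
  "'w measure \<Rightarrow> ('i \<Rightarrow> 'w \<Rightarrow> 'v::topological_space) \<Rightarrow> ('i \<Rightarrow> 'w \<Rightarrow> 'v) \<Rightarrow> bool" where
  "eq_law M X Y \<longleftrightarrow> (\<forall>T. finite T \<longrightarrow>
     distr M (Pi\<^sub>M T (\<lambda>_. borel)) (\<lambda>\<omega>. \<lambda>t\<in>T. X t \<omega>) =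
     distr M (Pi\<^sub>M T (\<lambda>_. borel)) (\<lambda>\<omega>. \<lambda>t\<in>T. Y t \<omega>))"

definition centered_gaussian_field ::
  "'w measure \<Rightarrow> (real^'m \<Rightarrow> 'w \<Rightarrow> real^'n) \<Rightarrow> bool" where
  "centered_gaussian_field M X \<longleftrightarrow>
     (\<forall>t. X t \<in> borel_measurable M) \<and>
     (\<forall>T (a :: real^'m \<Rightarrow> real^'n). finite T \<longrightarrow>
        (\<exists>\<sigma>\<ge>0. distr M borel (\<lambda>\<omega>. \<Sum>t\<in>T. a t \<bullet> X t \<omega>) =
                 (if \<sigma> = 0 then return borel 0 else density lborel (normal_density 0 \<sigma>))))"

definition stoch_continuous ::
  "'w measure \<Rightarrow> (real^'m \<Rightarrow> 'w \<Rightarrow> real^'n) \<Rightarrow> bool" where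
  "stoch_continuous M X \<longleftrightarrow> (\<forall>t e. e > 0 \<longrightarrow>
     ((\<lambda>s. measure M {\<omega>\<in>space M. dist (X s \<omega>) (X t \<omega>) > e}) \<longlongrightarrow> 0) (at t))"

definition stationary_increments ::
  "'w measure \<Rightarrow> (real^'m \<Rightarrow> 'w \<Rightarrow> real^'n) \<Rightarrow> bool" where
  "stationary_increments M X \<longleftrightarrow> (\<forall>h. eq_law M (\<lambda>t \<omega>. X (t + h) \<omega> - X h \<omega>) X)"

definition proper_field ::
  "'w measure \<Rightarrow> (real^'m \<Rightarrow> 'w \<Rightarrow> real^'n) \<Rightarrow> bool" where
  "proper_field M X \<longleftrightarrow> (\<forall>t. t \<noteq> 0 \<longrightarrow>
     (\<forall>v b. v \<noteq> 0 \<longrightarrow> \<not> (AE \<omega> in M. v \<bullet> X t \<omega> = b)))"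

definition nondegenerate_field ::
  "'w measure \<Rightarrow> (real^'m \<Rightarrow> 'w \<Rightarrow> real^'n) \<Rightarrow> bool" where
  "nondegenerate_field M X \<longleftrightarrow> \<not> (\<exists>P :: real^'m^'m. P ** P = P \<and> P \<noteq> mat 1 \<and>
     (\<forall>t. AE \<omega> in M. X t \<omega> = X (P *v t) \<omega>))"

definition OFBF ::
  "'w measure \<Rightarrow> (real^'m \<Rightarrow> 'w \<Rightarrow> real^'n) \<Rightarrow> real^'m^'m \<Rightarrow> real^'n^'n \<Rightarrow> bool" where
  "OFBF M X E H \<longleftrightarrow> prob_space M \<and>
     proper_field M X \<and> nondegenerate_field M X \<and> stoch_continuous M X \<and>
     centered_gaussian_field M X \<and> stationary_increments M X \<and>
     (\<forall>c>0. eq_law M (\<lambda>t \<omega>. X (opow c E *v t) \<omega>) (\<lambda>t \<omega>. opow c H *v X t \<omega>))"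

definition standing_eig_assumption :: "real^'m^'m \<Rightarrow> real^'n^'n \<Rightarrow> bool" where
  "standing_eig_assumption E H \<longleftrightarrow>
     (\<forall>l\<in>eigs H. 0 < Re l \<and> Re l < 1) \<and>
     (\<forall>l\<in>eigs (transpose E). 1 \<le> Re l) \<and> (\<exists>l\<in>eigs (transpose E). Re l = 1)"

text \<open>A Hermitian matrix-valued spectral (control) measure F is encoded as
  F(dx) = g(x) mu(dx), with mu a scalar Borel measure and g Hermitian positive
  semidefinite.\<close>
definition herm_psd :: "complex^'n^'n \<Rightarrow> bool" where
  "herm_psd A \<longleftrightarrow> (\<forall>i j. A $ i $ j = cnj (A $ j $ i)) \<and>
     (\<forall>u :: complex^'n. 0 \<le> Re (\<Sum>i\<in>UNIV. \<Sum>j\<in>UNIV. cnj (u $ i) * A $ i $ j * u $ j))"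

definition spec_kernel :: "real^'m \<Rightarrow> real^'m \<Rightarrow> real^'m \<Rightarrow> complex" where
  "spec_kernel s t x = (cis (s \<bullet> x) - 1) * (cis (- (t \<bullet> x)) - 1)"

definition spectral_rep ::
  "'w measure \<Rightarrow> (real^'m \<Rightarrow> 'w \<Rightarrow> real^'n) \<Rightarrow> (real^'m) measure \<Rightarrow> (real^'m \<Rightarrow> complex^'n^'n) \<Rightarrow> bool" where
  "spectral_rep M X \<mu> g \<longleftrightarrow> sets \<mu> = sets borel \<and>
     (\<forall>i j. (\<lambda>x. g x $ i $ j) \<in> borel_measurable borel) \<and> (\<forall>x. herm_psd (g x)) \<and>
     (\<forall>s t j k. integrable M (\<lambda>\<omega>. X s \<omega> $ j * X t \<omega> $ k) \<and>
        integrable \<mu> (\<lambda>x. spec_kernel s t x * g x $ j $ k) \<and>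
        complex_of_real (\<integral>\<omega>. X s \<omega> $ j * X t \<omega> $ k \<partial>M) =
          (\<integral>x. spec_kernel s t x * g x $ j $ k \<partial>\<mu>))"

definition spec_qf ::
  "(real^'m) measure \<Rightarrow> (real^'m \<Rightarrow> complex^'n^'n) \<Rightarrow> (real^'m) set \<Rightarrow> complex^'n \<Rightarrow> ennreal" where
  "spec_qf \<mu> g B u = (\<integral>\<^sup>+x\<in>B. ennreal (Re (\<Sum>i\<in>UNIV. \<Sum>j\<in>UNIV. cnj (u $ i) * g x $ i $ j * u $ j)) \<partial>\<mu>)"

text \<open>Condition (NS): max eig F(B) > 0 implies min eig F(B) > 0 (eigenvalues of the
  possibly infinite Hermitian matrix F(B) taken as extremal Rayleigh quotients).\<close>
definition cond_NS ::
  "(real^'m) measure \<Rightarrow> (real^'m \<Rightarrow> complex^'n^'n) \<Rightarrow> bool" where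
  "cond_NS \<mu> g \<longleftrightarrow> (\<forall>B\<in>sets borel.
     (SUP u\<in>{u. norm u = 1}. spec_qf \<mu> g B u) > 0 \<longrightarrow> (INF u\<in>{u. norm u = 1}. spec_qf \<mu> g B u) > 0)"

definition Gdom :: "'w measure \<Rightarrow> (real^'m \<Rightarrow> 'w \<Rightarrow> real^'n) \<Rightarrow> (real^'m^'m) set" where
  "Gdom M X = {A. invertible A \<and> eq_law M (\<lambda>t. X (A *v t)) X}"

definition Gran :: "'w measure \<Rightarrow> (real^'m \<Rightarrow> 'w \<Rightarrow> real^'n) \<Rightarrow> (real^'n^'n) set" where
  "Gran M X = {B. invertible B \<and> eq_law M (\<lambda>t \<omega>. B *v X t \<omega>) X}"

end

theory Submission
  imports Defs
begin

definition tp1 :: "(complex \<times> real) list \<Rightarrow> real \<Rightarrow> complex" where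
  "tp1 l y = (\<Sum>(c,w)\<leftarrow>l. c * cis (w * y))"

definition prodl :: "('c::times \<times> 'b::plus) list \<Rightarrow> ('c \<times> 'b) list \<Rightarrow> ('c \<times> 'b) list" where
  "prodl l1 l2 = concat (map (\<lambda>(c,w). map (\<lambda>(d,v). (c*d, w+v)) l2) l1)"

lemma tp1_append: "tp1 (l1 @ l2) y = tp1 l1 y + tp1 l2 y"
  by (simp add: tp1_def)

lemma tp1_prodl: "tp1 (prodl l1 l2) y = tp1 l1 y * tp1 l2 y"
proof (induction l1)
  case Nil then show ?case by (simp add: tp1_def prodl_def)
next
  case (Cons p l1)
  obtain c w where p: "p = (c,w)" by force
  have "tp1 (map (\<lambda>(d,v). (c*d, w+v)) l2) y = c * cis (w*y) * tp1 l2 y"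
  proof (induction l2)
    case Nil then show ?case by (simp add: tp1_def)
  next
    case (Cons q l2)
    obtain d v where q: "q = (d,v)" by force
    show ?case using Cons by (simp add: tp1_def q algebra_simps cis_mult)
  qed
  moreover have "prodl (p # l1) l2 = map (\<lambda>(d,v). (c*d, w+v)) l2 @ prodl l1 l2"
    by (simp add: p prodl_def)
  moreover have "tp1 (p # l1) y = c * cis (w*y) + tp1 l1 y" by (simp add: p tp1_def)
  ultimately show ?case using Cons by (simp add: tp1_append algebra_simps)
qed

lemma SW1:
  fixes \<phi> :: "complex \<Rightarrow> real"
  assumes "continuous_on (sphere 0 1) \<phi>" "e > 0"
  shows "\<exists>l. \<forall>y. cmod (complex_of_real (\<phi> (cis y)) - tp1 l y) < e"
proof -
  let ?P = "\<lambda>g. continuous_on (sphere (0::complex) 1) g \<and> (\<exists>l. \<forall>y. complex_of_real (g (cis y)) = tp1 l y)"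
  have "\<exists>g. ?P g \<and> (\<forall>x\<in>sphere 0 1. \<bar>\<phi> x - g x\<bar> < e)"
  proof (rule Stone_Weierstrass_HOL)
    show "compact (sphere (0::complex) 1)" by simp
    show "?P (\<lambda>x. c)" for c
      by (intro conjI continuous_intros exI[of _ "[(complex_of_real c, 0)]"]) (simp add: tp1_def)
    show "?P f \<Longrightarrow> continuous_on (sphere 0 1) f" for f by blast
    show "?P (\<lambda>x. f x + g x)" if "?P f \<and> ?P g" for f g
    proof -
      from that obtain l1 l2 where "\<forall>y. complex_of_real (f (cis y)) = tp1 l1 y"
        "\<forall>y. complex_of_real (g (cis y)) = tp1 l2 y" by blast
      then show ?thesis using that
        by (intro conjI continuous_intros exI[of _ "l1 @ l2"]) (auto simp: tp1_append)
    qed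
    show "?P (\<lambda>x. f x * g x)" if "?P f \<and> ?P g" for f g
    proof -
      from that obtain l1 l2 where "\<forall>y. complex_of_real (f (cis y)) = tp1 l1 y"
        "\<forall>y. complex_of_real (g (cis y)) = tp1 l2 y" by blast
      then show ?thesis using that
        by (intro conjI continuous_intros exI[of _ "prodl l1 l2"]) (auto simp: tp1_prodl)
    qed
    have PRe: "?P Re"
    proof (intro conjI continuous_intros exI[of _ "[(1/2, 1), (1/2, -1)]"] allI)
      fix y
      show "complex_of_real (Re (cis y)) = tp1 [(1/2, 1), (1/2, -1)] y"
        by (simp add: tp1_def complex_eq_iff)
    qed
    have PIm: "?P Im"
    proof (intro conjI continuous_intros exI[of _ "[(-\<i>/2, 1), (\<i>/2, -1)]"] allI)
      fix y
      show "complex_of_real (Im (cis y)) = tp1 [(-\<i>/2, 1), (\<i>/2, -1)] y"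
        by (simp add: tp1_def complex_eq_iff)
    qed
    show "\<exists>f. ?P f \<and> f x \<noteq> f y" if "x \<in> sphere 0 1 \<and> y \<in> sphere 0 1 \<and> x \<noteq> y" for x y
    proof (cases "Re x = Re y")
      case True
      then have "Im x \<noteq> Im y" using that complex_eq_iff by blast
      then show ?thesis using PIm by blast
    next
      case False then show ?thesis using PRe by blast
    qed
  qed (use assms in auto)
  then obtain g l where g: "\<forall>x\<in>sphere 0 1. \<bar>\<phi> x - g x\<bar> < e" "\<forall>y. complex_of_real (g (cis y)) = tp1 l y"
    by blast
  show ?thesis
  proof (intro exI allI)
    fix y
    have "cis y \<in> sphere 0 1" by simp
    then have "\<bar>\<phi> (cis y) - g (cis y)\<bar> < e" using g by blast
    then show "cmod (complex_of_real (\<phi> (cis y)) - tp1 l y) < e"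
      using g(2) by (metis norm_of_real of_real_diff)
  qed
qed

definition tpm :: "'i set \<Rightarrow> (complex \<times> ('i \<Rightarrow> real^'n)) list \<Rightarrow> ('i \<Rightarrow> real^'n) \<Rightarrow> complex" where
  "tpm T l x = (\<Sum>(c,a)\<leftarrow>l. c * cis (\<Sum>t\<in>T. a t \<bullet> x t))"

definition prodm :: "(complex \<times> ('i \<Rightarrow> real^'n)) list \<Rightarrow> (complex \<times> ('i \<Rightarrow> real^'n)) list \<Rightarrow> (complex \<times> ('i \<Rightarrow> real^'n)) list" where
  "prodm l1 l2 = concat (map (\<lambda>(c,a). map (\<lambda>(d,b). (c*d, \<lambda>t. a t + b t)) l2) l1)"

lemma tpm_append: "tpm T (l1 @ l2) x = tpm T l1 x + tpm T l2 x"
  by (simp add: tpm_def)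

lemma tpm_prodm: "tpm T (prodm l1 l2) x = tpm T l1 x * tpm T l2 x"
proof (induction l1)
  case Nil then show ?case by (simp add: tpm_def prodm_def)
next
  case (Cons p l1)
  obtain c a where p: "p = (c,a)" by force
  have "tpm T (map (\<lambda>(d,b). (c*d, \<lambda>t. a t + b t)) l2) x = c * cis (\<Sum>t\<in>T. a t \<bullet> x t) * tpm T l2 x"
  proof (induction l2)
    case Nil then show ?case by (simp add: tpm_def)
  next
    case (Cons q l2)
    obtain d b where q: "q = (d,b)" by force
    show ?case using Cons by (simp add: tpm_def q algebra_simps cis_mult inner_add_left sum.distrib)
  qed
  moreover have "prodm (p # l1) l2 = map (\<lambda>(d,b). (c*d, \<lambda>t. a t + b t)) l2 @ prodm l1 l2"
    by (simp add: p prodm_def)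
  moreover have "tpm T (p # l1) x = c * cis (\<Sum>t\<in>T. a t \<bullet> x t) + tpm T l1 x" by (simp add: p tpm_def)
  ultimately show ?case using Cons by (simp add: tpm_append algebra_simps)
qed

lemma tpm_coord:
  assumes "finite T" "s \<in> T"
  shows "tp1 l (\<kappa> * x s $ j) = tpm T (map (\<lambda>(c,w). (c, \<lambda>t. if t = s then (w*\<kappa>) *\<^sub>R axis j 1 else 0)) l) x"
proof (induction l)
  case Nil then show ?case by (simp add: tp1_def tpm_def)
next
  case (Cons p l)
  obtain c w where p: "p = (c,w)" by force
  have "(\<Sum>t\<in>T. (if t = s then (w*\<kappa>) *\<^sub>R axis j 1 else 0) \<bullet> x t) = w * (\<kappa> * x s $ j)"
    using assms by (simp add: if_distrib[of "\<lambda>v. v \<bullet> _"] sum.delta inner_axis' cong: if_cong)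
  then show ?case using Cons by (simp add: tp1_def tpm_def p)
qed

lemma tpm_prod:
  assumes "finite I" "\<forall>i\<in>I. \<exists>l. \<forall>x. f i x = tpm T l x"
  shows "\<exists>l. \<forall>x. (\<Prod>i\<in>I. f i x) = tpm T l x"
  using assms
proof (induction I rule: finite_induct)
  case empty
  show ?case by (intro exI[of _ "[(1, \<lambda>_. 0)]"]) (simp add: tpm_def)
next
  case (insert i I)
  then obtain l1 l2 where "\<forall>x. f i x = tpm T l1 x" "\<forall>x. (\<Prod>i\<in>I. f i x) = tpm T l2 x" by blast
  then show ?case using insert by (intro exI[of _ "prodm l1 l2"]) (simp add: tpm_prodm)
qed

lemma meas_cis:
  assumes "finite T" "sets P = sets (Pi\<^sub>M T (\<lambda>_. borel :: (real^'n) measure))"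
  shows "(\<lambda>x. cis (\<Sum>t\<in>T. a t \<bullet> x t)) \<in> borel_measurable P"
proof -
  have s: "(\<lambda>x. \<Sum>t\<in>T. a t \<bullet> x t) \<in> borel_measurable (Pi\<^sub>M T (\<lambda>_. borel :: (real^'n) measure))"
    by (rule borel_measurable_sum) measurable
  have c: "cis \<in> borel_measurable borel"
    by (intro borel_measurable_continuous_onI continuous_intros)
  have "(\<lambda>x. cis (\<Sum>t\<in>T. a t \<bullet> x t)) \<in> borel_measurable (Pi\<^sub>M T (\<lambda>_. borel :: (real^'n) measure))"
    using measurable_compose[OF s c] by (simp add: o_def)
  then show ?thesis using measurable_cong_sets[OF assms(2) refl] by blast
qed

lemma meas_tpm:
  assumes "finite T" "sets P = sets (Pi\<^sub>M T (\<lambda>_. borel :: (real^'n) measure))"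
  shows "tpm T l \<in> borel_measurable P"
proof (induction l)
  case Nil then show ?case by (simp add: tpm_def)
next
  case (Cons p l)
  obtain c a where p: "p = (c,a)" by force
  have "tpm T (p # l) = (\<lambda>x. c * cis (\<Sum>t\<in>T. a t \<bullet> x t) + tpm T l x)"
    by (auto simp: tpm_def p)
  then show ?case using Cons meas_cis[OF assms, of a] by simp
qed

lemma bound_tpm: "cmod (tpm T l x) \<le> (\<Sum>(c,a)\<leftarrow>l. cmod c)"
proof (induction l)
  case Nil then show ?case by (simp add: tpm_def)
next
  case (Cons p l)
  obtain c a where p: "p = (c,a)" by force
  have "cmod (tpm T (p # l) x) \<le> cmod (c * cis (\<Sum>t\<in>T. a t \<bullet> x t)) + cmod (tpm T l x)"
    by (simp add: tpm_def p norm_triangle_ineq)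
  also have "\<dots> \<le> cmod c + (\<Sum>(c,a)\<leftarrow>l. cmod c)" using Cons by (simp add: norm_mult)
  finally show ?case by (simp add: p)
qed

lemma integrable_tpm:
  assumes "finite_measure P" "finite T" "sets P = sets (Pi\<^sub>M T (\<lambda>_. borel :: (real^'n) measure))"
  shows "integrable P (tpm T l)"
  using finite_measure.integrable_const_bound[OF assms(1), of "tpm T l" "\<Sum>(c,a)\<leftarrow>l. cmod c"]
    bound_tpm meas_tpm[OF assms(2,3)] by blast

lemma int_tpm:
  assumes P: "finite_measure P" "sets P = sets (Pi\<^sub>M T (\<lambda>_. borel :: (real^'n) measure))"
    and Q: "finite_measure Q" "sets Q = sets (Pi\<^sub>M T (\<lambda>_. borel :: (real^'n) measure))"
    and T: "finite T"
    and ch: "\<And>a. (\<integral>x. cis (\<Sum>t\<in>T. a t \<bullet> x t) \<partial>P) = (\<integral>x. cis (\<Sum>t\<in>T. a t \<bullet> x t) \<partial>Q)"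
  shows "(\<integral>x. tpm T l x \<partial>P) = (\<integral>x. tpm T l x \<partial>Q)"
proof (induction l)
  case Nil then show ?case by (simp add: tpm_def)
next
  case (Cons p l)
  obtain c a where p: "p = (c,a)" by force
  have e: "tpm T (p # l) = (\<lambda>x. c * cis (\<Sum>t\<in>T. a t \<bullet> x t) + tpm T l x)"
    by (auto simp: tpm_def p)
  have e1: "tpm T [(1,a)] = (\<lambda>x. cis (\<Sum>t\<in>T. a t \<bullet> x t))" by (simp add: tpm_def fun_eq_iff)
  have iP: "integrable P (\<lambda>x. cis (\<Sum>t\<in>T. a t \<bullet> x t))"
    using integrable_tpm[OF P(1) T P(2), of "[(1,a)]"] by (simp only: e1)
  have iQ: "integrable Q (\<lambda>x. cis (\<Sum>t\<in>T. a t \<bullet> x t))"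
    using integrable_tpm[OF Q(1) T Q(2), of "[(1,a)]"] by (simp only: e1)
  show ?case unfolding e
    using Cons ch[of a] iP iQ integrable_tpm[OF P(1) T P(2), of l] integrable_tpm[OF Q(1) T Q(2), of l]
    by simp
qed

lemma int_close:
  fixes F G :: "'a \<Rightarrow> complex"
  assumes "prob_space P" "integrable P F" "integrable P G" "\<And>x. cmod (F x - G x) \<le> d"
  shows "cmod ((\<integral>x. F x \<partial>P) - (\<integral>x. G x \<partial>P)) \<le> d"
proof -
  have "cmod ((\<integral>x. F x \<partial>P) - (\<integral>x. G x \<partial>P)) = cmod (\<integral>x. F x - G x \<partial>P)"
    using assms by simp
  also have "\<dots> \<le> (\<integral>x. cmod (F x - G x) \<partial>P)" by (rule integral_norm_bound)
  also have "\<dots> \<le> d"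
    using assms by (intro prob_space.integral_le_const) auto
  finally show ?thesis .
qed

lemma meas_phi:
  fixes \<phi> :: "complex \<Rightarrow> real"
  assumes "continuous_on (sphere 0 1) \<phi>"
  shows "(\<lambda>y::real. \<phi> (cis (\<kappa> * y))) \<in> borel_measurable borel"
proof (rule borel_measurable_continuous_onI)
  have "continuous_on UNIV (\<lambda>y::real. cis (\<kappa> * y))" by (intro continuous_intros)
  moreover have "(\<lambda>y::real. cis (\<kappa> * y)) ` UNIV \<subseteq> sphere 0 1" by auto
  ultimately show "continuous_on UNIV (\<lambda>y::real. \<phi> (cis (\<kappa> * y)))"
    using continuous_on_compose2[OF assms] by blast
qed

lemma PL:
  fixes \<phi> :: "'i \<Rightarrow> 'n::finite \<Rightarrow> complex \<Rightarrow> real"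
  assumes P: "prob_space P" "sets P = sets (Pi\<^sub>M T (\<lambda>_. borel :: (real^'n) measure))"
    and Q: "prob_space Q" "sets Q = sets (Pi\<^sub>M T (\<lambda>_. borel :: (real^'n) measure))"
    and T: "finite T"
    and ch: "\<And>a. (\<integral>x. cis (\<Sum>t\<in>T. a t \<bullet> x t) \<partial>P) = (\<integral>x. cis (\<Sum>t\<in>T. a t \<bullet> x t) \<partial>Q)"
    and cont: "\<And>t j. continuous_on (sphere 0 1) (\<phi> t j)"
    and rng: "\<And>t j z. z \<in> sphere 0 1 \<Longrightarrow> 0 \<le> \<phi> t j z \<and> \<phi> t j z \<le> 1/2"
  shows "(\<integral>x. (\<Prod>(t,j)\<in>T\<times>UNIV. \<phi> t j (cis (\<kappa> * x t $ j))) \<partial>P)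
       = (\<integral>x. (\<Prod>(t,j)\<in>T\<times>UNIV. \<phi> t j (cis (\<kappa> * x t $ j))) \<partial>Q)"
proof -
  define I where "I = T \<times> (UNIV :: 'n set)"
  have fI: "finite I" using T by (simp add: I_def)
  define F where "F x = (\<Prod>i\<in>I. complex_of_real (\<phi> (fst i) (snd i) (cis (\<kappa> * x (fst i) $ snd i))))" for x :: "'i \<Rightarrow> real^'n"
  have measF: "F \<in> borel_measurable (Pi\<^sub>M T (\<lambda>_. borel :: (real^'n) measure))"
    unfolding F_def
  proof (rule borel_measurable_prod)
    fix i assume "i \<in> I"
    then obtain t j where i: "i = (t,j)" "t \<in> T" by (auto simp: I_def)
    have "(\<lambda>x::'i \<Rightarrow> real^'n. x t $ j) \<in> borel_measurable (Pi\<^sub>M T (\<lambda>_. borel :: (real^'n) measure))"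
    proof -
      have "(\<lambda>v::real^'n. v $ j) \<in> borel_measurable borel"
        by (intro borel_measurable_continuous_onI linear_continuous_on bounded_linear_vec_nth)
      from measurable_compose[OF measurable_component_singleton[OF i(2)] this] show ?thesis .
    qed
    from measurable_compose[OF this meas_phi[OF cont[of t j], of \<kappa>]]
    have "(\<lambda>x::'i \<Rightarrow> real^'n. \<phi> t j (cis (\<kappa> * x t $ j))) \<in> borel_measurable (Pi\<^sub>M T (\<lambda>_. borel :: (real^'n) measure))" .
    then show "(\<lambda>x. complex_of_real (\<phi> (fst i) (snd i) (cis (\<kappa> * x (fst i) $ snd i)))) \<in> borel_measurable (Pi\<^sub>M T (\<lambda>_. borel))"
      by (simp add: i)
  qed
  have boundF: "cmod (F x) \<le> 1" for x
  proof -
    have "cmod (F x) = (\<Prod>i\<in>I. cmod (complex_of_real (\<phi> (fst i) (snd i) (cis (\<kappa> * x (fst i) $ snd i)))))"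
      unfolding F_def prod_norm[symmetric] by simp
    also have "\<dots> \<le> 1"
    proof (rule prod_le_1)
      fix i assume "i \<in> I"
      have "cis (\<kappa> * x (fst i) $ snd i) \<in> sphere 0 1" by simp
      from rng[OF this, of "fst i" "snd i"]
      show "0 \<le> cmod (complex_of_real (\<phi> (fst i) (snd i) (cis (\<kappa> * x (fst i) $ snd i)))) \<and>
        cmod (complex_of_real (\<phi> (fst i) (snd i) (cis (\<kappa> * x (fst i) $ snd i)))) \<le> 1"
        by auto
    qed
    finally show ?thesis .
  qed
  have mP: "F \<in> borel_measurable P" "F \<in> borel_measurable Q"
    using measF measurable_cong_sets[OF P(2) refl] measurable_cong_sets[OF Q(2) refl] by blast+
  have intF: "integrable P F" "integrable Q F"
    using prob_space.finite_measure[OF P(1)] prob_space.finite_measure[OF Q(1)] boundF mP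
    by (auto intro!: finite_measure.integrable_const_bound[where B=1])
  have key: "cmod ((\<integral>x. F x \<partial>P) - (\<integral>x. F x \<partial>Q)) \<le> 2 * card I * e" if e: "0 < e" "e \<le> 1/2" for e :: real
  proof -
    have "\<forall>i. \<exists>l. \<forall>y. cmod (complex_of_real (\<phi> (fst i) (snd i) (cis y)) - tp1 l y) < e"
    proof
      fix i :: "'i \<times> 'n"
      show "\<exists>l. \<forall>y. cmod (complex_of_real (\<phi> (fst i) (snd i) (cis y)) - tp1 l y) < e"
        using SW1[OF cont[of "fst i" "snd i"] e(1)] .
    qed
    then obtain l where l: "\<And>i y. cmod (complex_of_real (\<phi> (fst i) (snd i) (cis y)) - tp1 (l i) y) < e"
      by metis
    define G where "G x = (\<Prod>(t,j)\<in>I. tp1 (l (t,j)) (\<kappa> * x t $ j))" for x :: "'i \<Rightarrow> real^'n"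
    have "\<exists>L. \<forall>x. G x = tpm T L x"
      unfolding G_def
    proof (rule tpm_prod[OF fI], intro ballI)
      fix i assume "i \<in> I"
      then obtain t j where i: "i = (t,j)" "t \<in> T" by (auto simp: I_def)
      show "\<exists>L. \<forall>x. (case i of (t, j) \<Rightarrow> tp1 (l (t, j)) (\<kappa> * x t $ j)) = tpm T L x"
        using tpm_coord[OF T i(2), of "l (t,j)" \<kappa> _ j] by (auto simp: i)
    qed
    then obtain L where L: "\<And>x. G x = tpm T L x" by blast
    have Geq: "(\<integral>x. G x \<partial>P) = (\<integral>x. G x \<partial>Q)"
      unfolding L using int_tpm[OF prob_space.finite_measure[OF P(1)] P(2) prob_space.finite_measure[OF Q(1)] Q(2) T ch] .
    have intG: "integrable P G" "integrable Q G"
      unfolding L using integrable_tpm prob_space.finite_measure P Q T by blast+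
    have close: "cmod (F x - G x) \<le> card I * e" for x
    proof -
      have "cmod (F x - G x) \<le> (\<Sum>i\<in>I. cmod (complex_of_real (\<phi> (fst i) (snd i) (cis (\<kappa> * x (fst i) $ snd i))) - tp1 (l i) (\<kappa> * x (fst i) $ snd i)))"
        unfolding F_def G_def split_beta prod.collapse
      proof (rule norm_prod_diff)
        fix i assume "i \<in> I"
        show "cmod (complex_of_real (\<phi> (fst i) (snd i) (cis (\<kappa> * x (fst i) $ snd i)))) \<le> 1"
          using rng[of "cis (\<kappa> * x (fst i) $ snd i)" "fst i" "snd i"] by simp
        have "cmod (tp1 (l i) (\<kappa> * x (fst i) $ snd i)) \<le> cmod (complex_of_real (\<phi> (fst i) (snd i) (cis (\<kappa> * x (fst i) $ snd i)))) + e"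
          using l[of i "\<kappa> * x (fst i) $ snd i"] norm_triangle_ineq3[of "complex_of_real (\<phi> (fst i) (snd i) (cis (\<kappa> * x (fst i) $ snd i)))" "tp1 (l i) (\<kappa> * x (fst i) $ snd i)"]
          by (simp add: norm_minus_commute)
        also have "\<dots> \<le> 1"
          using rng[of "cis (\<kappa> * x (fst i) $ snd i)" "fst i" "snd i"] e by simp
        finally show "cmod (tp1 (l i) (\<kappa> * x (fst i) $ snd i)) \<le> 1" .
      qed
      also have "\<dots> \<le> (\<Sum>i\<in>I. e)"
        by (intro sum_mono less_imp_le l)
      finally show ?thesis by simp
    qed
    have "cmod ((\<integral>x. F x \<partial>P) - (\<integral>x. F x \<partial>Q)) \<le>
        cmod ((\<integral>x. F x \<partial>P) - (\<integral>x. G x \<partial>P)) + cmod ((\<integral>x. G x \<partial>Q) - (\<integral>x. F x \<partial>Q))"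
      using Geq norm_triangle_ineq[of "(\<integral>x. F x \<partial>P) - (\<integral>x. G x \<partial>P)" "(\<integral>x. G x \<partial>Q) - (\<integral>x. F x \<partial>Q)"]
      by simp
    also have "\<dots> \<le> card I * e + card I * e"
      using int_close[OF P(1) intF(1) intG(1) close] int_close[OF Q(1) intG(2) intF(2), of "card I * e"] close
      by (intro add_mono) (auto simp: norm_minus_commute)
    finally show ?thesis by (simp add: algebra_simps)
  qed
  have "cmod ((\<integral>x. F x \<partial>P) - (\<integral>x. F x \<partial>Q)) \<le> 0"
  proof (rule ccontr)
    define d where "d = cmod ((\<integral>x. F x \<partial>P) - (\<integral>x. F x \<partial>Q))"
    assume "\<not> ?thesis"
    then have d: "d > 0" by (simp add: d_def)
    define e where "e = min (1/2) (d / (4 * card I + 4))"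
    have e1: "0 < e" using d unfolding e_def by (auto intro!: divide_pos_pos add_nonneg_pos)
    have e2: "e \<le> 1/2" unfolding e_def by (rule min.cobounded1)
    note e = e1 e2
    have "d \<le> 2 * card I * e" using key[OF e] by (simp add: d_def)
    also have "\<dots> \<le> 2 * card I * (d / (4 * card I + 4))"
      by (intro mult_left_mono) (auto simp: e_def)
    also have "\<dots> < d" using d by (simp add: field_simps add_pos_nonneg)
    finally show False by simp
  qed
  then have "(\<integral>x. F x \<partial>P) = (\<integral>x. F x \<partial>Q)" by simp
  then have "complex_of_real (\<integral>x. (\<Prod>i\<in>I. \<phi> (fst i) (snd i) (cis (\<kappa> * x (fst i) $ snd i))) \<partial>P)
     = complex_of_real (\<integral>x. (\<Prod>i\<in>I. \<phi> (fst i) (snd i) (cis (\<kappa> * x (fst i) $ snd i))) \<partial>Q)"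
    unfolding F_def by (simp only: of_real_prod[symmetric] integral_complex_of_real)
  then show ?thesis
    unfolding I_def of_real_eq_iff by (simp add: split_beta)
qed

lemma meas_coord:
  assumes "t \<in> T" "g \<in> borel_measurable (borel :: real measure)"
  shows "(\<lambda>x::'i \<Rightarrow> real^'n. g (x t $ j)) \<in> borel_measurable (Pi\<^sub>M T (\<lambda>_. borel :: (real^'n) measure))"
proof -
  have "(\<lambda>v::real^'n. v $ j) \<in> borel_measurable borel"
    by (intro borel_measurable_continuous_onI linear_continuous_on bounded_linear_vec_nth)
  from measurable_compose[OF measurable_compose[OF measurable_component_singleton[OF assms(1)] this] assms(2)]
  show ?thesis by (simp add: o_def)
qed

lemma meas_prodcoord:
  fixes g :: "'i \<Rightarrow> 'n::finite \<Rightarrow> real \<Rightarrow> real"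
  assumes "sets P = sets (Pi\<^sub>M T (\<lambda>_. borel :: (real^'n) measure))"
    and "\<And>t j. t \<in> T \<Longrightarrow> g t j \<in> borel_measurable borel"
  shows "(\<lambda>x. \<Prod>i\<in>T\<times>UNIV. g (fst i) (snd i) (x (fst i) $ snd i)) \<in> borel_measurable P"
proof -
  have "(\<lambda>x. \<Prod>i\<in>T\<times>UNIV. g (fst i) (snd i) (x (fst i) $ snd i)) \<in> borel_measurable (Pi\<^sub>M T (\<lambda>_. borel :: (real^'n) measure))"
  proof (rule borel_measurable_prod)
    fix i assume "i \<in> T \<times> (UNIV :: 'n set)"
    then show "(\<lambda>x::'i \<Rightarrow> real^'n. g (fst i) (snd i) (x (fst i) $ snd i)) \<in> borel_measurable (Pi\<^sub>M T (\<lambda>_. borel))"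
      using meas_coord[of "fst i" T "g (fst i) (snd i)"] assms(2) by auto
  qed
  then show ?thesis using measurable_cong_sets[OF assms(1) refl] by blast
qed

lemma PLind:
  fixes U :: "'i \<Rightarrow> 'n::finite \<Rightarrow> complex set"
  assumes P: "prob_space P" "sets P = sets (Pi\<^sub>M T (\<lambda>_. borel :: (real^'n) measure))"
    and Q: "prob_space Q" "sets Q = sets (Pi\<^sub>M T (\<lambda>_. borel :: (real^'n) measure))"
    and T: "finite T"
    and ch: "\<And>a. (\<integral>x. cis (\<Sum>t\<in>T. a t \<bullet> x t) \<partial>P) = (\<integral>x. cis (\<Sum>t\<in>T. a t \<bullet> x t) \<partial>Q)"
    and U: "\<And>t j. open (U t j)"
  shows "(\<integral>x. (\<Prod>i\<in>T\<times>UNIV. indicator (U (fst i) (snd i)) (cis (\<kappa> * x (fst i) $ snd i)) :: real) \<partial>P)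
       = (\<integral>x. (\<Prod>i\<in>T\<times>UNIV. indicator (U (fst i) (snd i)) (cis (\<kappa> * x (fst i) $ snd i)) :: real) \<partial>Q)"
proof -
  define \<phi> where "\<phi> n t j z = (if U t j = UNIV then 1/2 else min (1/2) (real n * infdist z (- U t j)))"
    for n :: nat and t :: 'i and j :: 'n and z :: complex
  define f where "f x = (\<Prod>i\<in>T\<times>UNIV. (1/2) * indicator (U (fst i) (snd i)) (cis (\<kappa> * x (fst i) $ snd i)) :: real)"
    for x :: "'i \<Rightarrow> real^'n"
  define s where "s n x = (\<Prod>i\<in>T\<times>UNIV. \<phi> n (fst i) (snd i) (cis (\<kappa> * x (fst i) $ snd i)))"
    for n and x :: "'i \<Rightarrow> real^'n"
  have cont: "continuous_on (sphere 0 1) (\<phi> n t j)" for n t j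
    unfolding \<phi>_def by (cases "U t j = UNIV") (auto intro!: continuous_intros)
  have rng: "0 \<le> \<phi> n t j z \<and> \<phi> n t j z \<le> 1/2" for n t j z
    unfolding \<phi>_def by (auto simp: infdist_nonneg)
  have rng1: "0 \<le> \<phi> n t j z \<and> \<phi> n t j z \<le> 1" for n t j z
    using rng[of n t j z] by linarith
  have eqn: "(\<integral>x. s n x \<partial>P) = (\<integral>x. s n x \<partial>Q)" for n
    using PL[OF P Q T ch cont rng, where \<kappa>=\<kappa>] by (simp add: s_def split_beta)
  have lim1: "(\<lambda>n. \<phi> n t j z) \<longlonglongrightarrow> (1/2) * indicator (U t j) z" for t j z
  proof (cases "U t j = UNIV")
    case True then show ?thesis by (simp add: \<phi>_def)
  next
    case False
    show ?thesis
    proof (cases "z \<in> U t j")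
      case True
      have "infdist z (- U t j) > 0"
        using False True U by (intro infdist_pos_not_in_closed) auto
      then have "\<forall>\<^sub>F n in sequentially. 1/2 \<le> real n * infdist z (- U t j)"
      proof -
        assume d: "infdist z (- U t j) > 0"
        obtain N :: nat where N: "1 / (2 * infdist z (- U t j)) \<le> N" using real_arch_simple by blast
        show ?thesis unfolding eventually_sequentially
        proof (intro exI allI impI)
          fix n assume "N \<le> n"
          then have "1 / (2 * infdist z (- U t j)) \<le> real n" using N by linarith
          then show "1/2 \<le> real n * infdist z (- U t j)" using d by (simp add: field_simps)
        qed
      qed
      then have "\<forall>\<^sub>F n in sequentially. \<phi> n t j z = 1/2"
        by eventually_elim (use False in \<open>auto simp: \<phi>_def\<close>)
      then show ?thesis using True by (simp add: tendsto_eventually)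
    next
      case False2: False
      then show ?thesis using False by (simp add: \<phi>_def)
    qed
  qed
  have lim: "(\<lambda>n. s n x) \<longlonglongrightarrow> f x" for x
    unfolding s_def f_def by (intro tendsto_prod lim1)
  have measf: "f \<in> borel_measurable P" "f \<in> borel_measurable Q"
  proof -
    have gm: "(\<lambda>y::real. (1/2) * indicator (U t j) (cis (\<kappa> * y)) :: real) \<in> borel_measurable borel" for t j
    proof -
      have c: "(\<lambda>y::real. cis (\<kappa> * y)) \<in> borel_measurable borel"
        by (intro borel_measurable_continuous_onI continuous_intros)
      have "indicator (U t j) \<in> borel_measurable (borel :: complex measure)"
        using U[of t j] by (intro borel_measurable_indicator borel_open)
      from measurable_compose[OF c this] show ?thesis
        by (intro borel_measurable_times) (auto simp: o_def)
    qed
    then show "f \<in> borel_measurable P" "f \<in> borel_measurable Q"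
      unfolding f_def
      using meas_prodcoord[OF P(2), where g="\<lambda>t j y. (1/2) * indicator (U t j) (cis (\<kappa> * y))", OF gm]
        meas_prodcoord[OF Q(2), where g="\<lambda>t j y. (1/2) * indicator (U t j) (cis (\<kappa> * y))", OF gm]
      by simp_all
  qed
  have meass: "s n \<in> borel_measurable P" "s n \<in> borel_measurable Q" for n
    unfolding s_def
    using meas_prodcoord[OF P(2), where g="\<lambda>t j y. \<phi> n t j (cis (\<kappa> * y))", OF meas_phi[OF cont]]
      meas_prodcoord[OF Q(2), where g="\<lambda>t j y. \<phi> n t j (cis (\<kappa> * y))", OF meas_phi[OF cont]]
    by simp_all
  have bnd: "norm (s n x) \<le> 1" for n x
  proof -
    have "\<bar>s n x\<bar> = s n x" unfolding s_def using rng by (intro abs_of_nonneg prod_nonneg) auto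
    also have "\<dots> \<le> 1" unfolding s_def using rng1 by (intro prod_le_1) blast
    finally show ?thesis by simp
  qed
  have "(\<lambda>n. \<integral>x. s n x \<partial>P) \<longlonglongrightarrow> (\<integral>x. f x \<partial>P)"
    by (intro integral_dominated_convergence[where w="\<lambda>_. 1"] measf meass AE_I2 lim)
      (use bnd finite_measure.integrable_const[OF prob_space.finite_measure[OF P(1)]] in auto)
  moreover have "(\<lambda>n. \<integral>x. s n x \<partial>P) \<longlonglongrightarrow> (\<integral>x. f x \<partial>Q)"
    unfolding eqn by (intro integral_dominated_convergence[where w="\<lambda>_. 1"] measf meass AE_I2 lim)
      (use bnd finite_measure.integrable_const[OF prob_space.finite_measure[OF Q(1)]] in auto)
  ultimately have "(\<integral>x. f x \<partial>P) = (\<integral>x. f x \<partial>Q)" by (rule LIMSEQ_unique)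
  moreover have "f x = (1/2) ^ card (T \<times> (UNIV::'n set)) * (\<Prod>i\<in>T\<times>UNIV. indicator (U (fst i) (snd i)) (cis (\<kappa> * x (fst i) $ snd i)))" for x
    unfolding f_def by (simp only: prod.distrib prod_constant)
  ultimately show ?thesis by simp
qed

lemma coord_eq:
  fixes L a b y :: real
  assumes L: "L > 0" and y: "\<bar>y\<bar> < L"
  shows "indicator {a<..<b} y = (indicator (- ((\<lambda>y. cis (pi / L * y)) ` ({-L..L} - {a<..<b}))) (cis (pi/L * y)) :: real)"
proof (cases "y \<in> {a<..<b}")
  case True
  have "cis (pi/L * y) \<notin> (\<lambda>y. cis (pi / L * y)) ` ({-L..L} - {a<..<b})"
  proof
    assume "cis (pi/L * y) \<in> (\<lambda>y. cis (pi / L * y)) ` ({-L..L} - {a<..<b})"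
    then obtain y' where y': "y' \<in> {-L..L}" "y' \<notin> {a<..<b}" "cis (pi / L * y') = cis (pi/L * y)" by auto
    then have "sin (pi / L * y') = sin (pi/L * y) \<and> cos (pi / L * y') = cos (pi/L * y)"
      by (metis cis.sel(1) cis.sel(2))
    then obtain n :: int where n: "pi / L * y' = pi/L * y + 2 * pi * n" using sin_cos_eq_iff by blast
    have "y' = (L/pi) * (pi/L*y')" using L by simp
    also have "\<dots> = (L/pi)*(pi/L*y + 2*pi*n)" using n by simp
    also have "\<dots> = y + 2*L*n" using L pi_gt_zero by (simp add: field_simps)
    finally have "y' = y + 2 * L * n" .
    moreover have "\<bar>y' - y\<bar> < 2 * L" using y y'(1) by auto
    ultimately have "\<bar>real_of_int n\<bar> < 1" using L by (simp add: abs_mult)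
    then have "n = 0" by linarith
    then show False using \<open>y' = y + 2 * L * n\<close> y'(2) True by simp
  qed
  then show ?thesis using True by simp
next
  case False
  have "y \<in> {-L..L} - {a<..<b}" using y False by auto
  then have "cis (pi/L * y) \<in> (\<lambda>y. cis (pi / L * y)) ` ({-L..L} - {a<..<b})" by (rule imageI)
  then show ?thesis using False by simp
qed



lemma meas_ind_cis:
  assumes "open U"
  shows "(\<lambda>y::real. indicator U (cis (\<kappa> * y)) :: real) \<in> borel_measurable borel"
proof -
  have c: "(\<lambda>y::real. cis (\<kappa> * y)) \<in> borel_measurable borel"
    by (intro borel_measurable_continuous_onI continuous_intros)
  have "indicator U \<in> borel_measurable (borel :: complex measure)"
    using assms by (intro borel_measurable_indicator borel_open)
  from measurable_compose[OF c this] show ?thesis by (simp add: o_def)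
qed

lemma abs_int_diff_le:
  fixes f g c :: "'a \<Rightarrow> real"
  assumes "integrable P f" "integrable P g" "integrable P c" "\<And>x. \<bar>f x - g x\<bar> \<le> c x"
  shows "\<bar>(\<integral>x. f x \<partial>P) - (\<integral>x. g x \<partial>P)\<bar> \<le> (\<integral>x. c x \<partial>P)"
proof -
  have "\<bar>(\<integral>x. f x \<partial>P) - (\<integral>x. g x \<partial>P)\<bar> = \<bar>\<integral>x. f x - g x \<partial>P\<bar>" using assms by simp
  also have "\<dots> \<le> (\<integral>x. \<bar>f x - g x\<bar> \<partial>P)" by (rule integral_abs_bound)
  also have "\<dots> \<le> (\<integral>x. c x \<partial>P)" using assms by (intro integral_mono) auto
  finally show ?thesis .
qed

lemma BOX:
  fixes a b :: "'i \<Rightarrow> 'n::finite \<Rightarrow> real"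
  assumes P: "prob_space P" "sets P = sets (Pi\<^sub>M T (\<lambda>_. borel :: (real^'n) measure))"
    and Q: "prob_space Q" "sets Q = sets (Pi\<^sub>M T (\<lambda>_. borel :: (real^'n) measure))"
    and T: "finite T"
    and ch: "\<And>a. (\<integral>x. cis (\<Sum>t\<in>T. a t \<bullet> x t) \<partial>P) = (\<integral>x. cis (\<Sum>t\<in>T. a t \<bullet> x t) \<partial>Q)"
  shows "(\<integral>x. (\<Prod>i\<in>T\<times>UNIV. indicator {a (fst i) (snd i)<..<b (fst i) (snd i)} (x (fst i) $ snd i)) \<partial>P)
       = (\<integral>x. (\<Prod>i\<in>T\<times>UNIV. indicator {a (fst i) (snd i)<..<b (fst i) (snd i)} (x (fst i) $ snd i) :: real) \<partial>Q)"
proof -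
  define I where "I = T \<times> (UNIV :: 'n set)"
  have fI: "finite I" using T by (simp add: I_def)
  define B where "B x = (\<Prod>i\<in>I. indicator {a (fst i) (snd i)<..<b (fst i) (snd i)} (x (fst i) $ snd i) :: real)"
    for x :: "'i \<Rightarrow> real^'n"
  define L where "L n = real n + 1" for n :: nat
  have L0: "L n > 0" for n by (simp add: L_def)
  define U where "U n t j = - ((\<lambda>y. cis (pi / L n * y)) ` ({-L n..L n} - {a t j<..<b t j}))" for n t j
  have openU: "open (U n t j)" for n t j
  proof -
    have "compact ((\<lambda>y. cis (pi / L n * y)) ` ({-L n..L n} - {a t j<..<b t j}))"
      by (intro compact_continuous_image continuous_intros compact_diff) auto
    then show ?thesis unfolding U_def by (intro open_Compl compact_imp_closed)
  qed
  define g where "g n x = (\<Prod>i\<in>I. indicator (U n (fst i) (snd i)) (cis (pi / L n * x (fst i) $ snd i)) :: real)"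
    for n x
  define c where "c n x = 1 - (\<Prod>i\<in>I. indicator {-L n<..<L n} (x (fst i) $ snd i) :: real)" for n x
  have geq: "(\<integral>x. g n x \<partial>P) = (\<integral>x. g n x \<partial>Q)" for n
    unfolding g_def I_def using PLind[OF P Q T ch openU, where \<kappa>="pi / L n"] .
  have pw: "\<bar>B x - g n x\<bar> \<le> c n x" for n x
  proof (cases "\<forall>i\<in>I. \<bar>x (fst i) $ snd i\<bar> < L n")
    case True
    then have "(\<Prod>i\<in>I. indicator {-L n<..<L n} (x (fst i) $ snd i) :: real) = 1"
      by (intro prod.neutral) (auto simp: abs_less_iff)
    moreover have "B x = g n x"
      unfolding B_def g_def U_def
      by (intro prod.cong refl coord_eq L0) (use True in auto)
    ultimately show ?thesis by (simp add: c_def)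
  next
    case False
    then obtain i where i: "i \<in> I" "\<not> \<bar>x (fst i) $ snd i\<bar> < L n" by blast
    then have "(\<Prod>i\<in>I. indicator {-L n<..<L n} (x (fst i) $ snd i) :: real) = 0"
      using fI i by (intro prod_zero bexI[OF _ i(1)]) (auto simp: indicator_def abs_less_iff)
    moreover have "0 \<le> B x" "B x \<le> 1" "0 \<le> g n x" "g n x \<le> 1"
      unfolding B_def g_def by (auto intro!: prod_nonneg prod_le_1)
    ultimately show ?thesis by (simp add: c_def)
  qed
  have measB: "B \<in> borel_measurable M" if "sets M = sets (Pi\<^sub>M T (\<lambda>_. borel :: (real^'n) measure))" for M
    unfolding B_def I_def using meas_prodcoord[OF that, where g="\<lambda>t j y. indicator {a t j<..<b t j} y"]
    by simp
  have measg: "g n \<in> borel_measurable M" if "sets M = sets (Pi\<^sub>M T (\<lambda>_. borel :: (real^'n) measure))" for M n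
    unfolding g_def I_def using meas_prodcoord[OF that, where g="\<lambda>t j y. indicator (U n t j) (cis (pi / L n * y))", OF meas_ind_cis[OF openU]]
    by simp
  have measc: "c n \<in> borel_measurable M" if "sets M = sets (Pi\<^sub>M T (\<lambda>_. borel :: (real^'n) measure))" for M n
    unfolding c_def I_def using meas_prodcoord[OF that, where g="\<lambda>t j y. indicator {-L n<..<L n} y"]
    by simp
  have bnds: "\<bar>B x\<bar> \<le> 1" "\<bar>g n x\<bar> \<le> 1" "\<bar>c n x\<bar> \<le> 1" for n x
  proof -
    have "0 \<le> B x" "B x \<le> 1" "0 \<le> g n x" "g n x \<le> 1"
      unfolding B_def g_def by (auto intro!: prod_nonneg prod_le_1)
    moreover have "0 \<le> (\<Prod>i\<in>I. indicator {-L n<..<L n} (x (fst i) $ snd i) :: real)"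
      "(\<Prod>i\<in>I. indicator {-L n<..<L n} (x (fst i) $ snd i) :: real) \<le> 1"
      by (auto intro!: prod_nonneg prod_le_1)
    ultimately show "\<bar>B x\<bar> \<le> 1" "\<bar>g n x\<bar> \<le> 1" "\<bar>c n x\<bar> \<le> 1" by (auto simp: c_def)
  qed
  have integ: "integrable M B" "integrable M (g n)" "integrable M (c n)"
    if "prob_space M" "sets M = sets (Pi\<^sub>M T (\<lambda>_. borel :: (real^'n) measure))" for M n
  proof -
    note r = finite_measure.integrable_const_bound[OF prob_space.finite_measure[OF that(1)], where B=1]
    show "integrable M B" by (rule r[OF AE_I2 measB[OF that(2)]]) (use bnds in simp)
    show "integrable M (g n)" by (rule r[OF AE_I2 measg[OF that(2)]]) (use bnds in simp)
    show "integrable M (c n)" by (rule r[OF AE_I2 measc[OF that(2)]]) (use bnds in simp)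
  qed
  have climpt: "(\<lambda>n. c n x) \<longlonglongrightarrow> 0" for x
  proof -
    have "\<forall>\<^sub>F n in sequentially. \<forall>i\<in>I. \<bar>x (fst i) $ snd i\<bar> < L n"
    proof (rule eventually_ball_finite[OF fI], intro ballI)
      fix i
      obtain N :: nat where "\<bar>x (fst i) $ snd i\<bar> \<le> N" using real_arch_simple by blast
      then show "\<forall>\<^sub>F n in sequentially. \<bar>x (fst i) $ snd i\<bar> < L n"
        unfolding eventually_sequentially L_def by (intro exI[of _ N]) auto
    qed
    then have "\<forall>\<^sub>F n in sequentially. c n x = 0"
    proof eventually_elim
      case (elim n)
      then have "(\<Prod>i\<in>I. indicator {-L n<..<L n} (x (fst i) $ snd i) :: real) = 1"
        by (intro prod.neutral) (auto simp: abs_less_iff)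
      then show ?case by (simp add: c_def)
    qed
    then show ?thesis by (simp add: tendsto_eventually)
  qed
  have clim: "(\<lambda>n. \<integral>x. c n x \<partial>M) \<longlonglongrightarrow> 0"
    if "prob_space M" "sets M = sets (Pi\<^sub>M T (\<lambda>_. borel :: (real^'n) measure))" for M
  proof -
    have "(\<lambda>n. \<integral>x. c n x \<partial>M) \<longlonglongrightarrow> (\<integral>x. 0 \<partial>M)"
      by (intro integral_dominated_convergence[where w="\<lambda>_. 1"] measc[OF that(2)] AE_I2 climpt)
        (use bnds finite_measure.integrable_const[OF prob_space.finite_measure[OF that(1)]] in auto)
    then show ?thesis by simp
  qed
  have bound: "\<bar>(\<integral>x. B x \<partial>P) - (\<integral>x. B x \<partial>Q)\<bar> \<le> (\<integral>x. c n x \<partial>P) + (\<integral>x. c n x \<partial>Q)" for n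
  proof -
    have "\<bar>(\<integral>x. B x \<partial>P) - (\<integral>x. g n x \<partial>P)\<bar> \<le> (\<integral>x. c n x \<partial>P)"
      using integ[OF P] pw by (intro abs_int_diff_le) auto
    moreover have "\<bar>(\<integral>x. B x \<partial>Q) - (\<integral>x. g n x \<partial>Q)\<bar> \<le> (\<integral>x. c n x \<partial>Q)"
      using integ[OF Q] pw by (intro abs_int_diff_le) auto
    ultimately show ?thesis using geq[of n] by linarith
  qed
  have "(\<lambda>n. (\<integral>x. c n x \<partial>P) + (\<integral>x. c n x \<partial>Q)) \<longlonglongrightarrow> 0 + 0"
    by (intro tendsto_add clim P Q)
  then have "\<bar>(\<integral>x. B x \<partial>P) - (\<integral>x. B x \<partial>Q)\<bar> \<le> 0"
    using bound by (intro LIMSEQ_le_const) auto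
  then show ?thesis unfolding B_def I_def by simp
qed

lemma sets_PiM_box:
  assumes T: "finite T"
  shows "sets (Pi\<^sub>M T (\<lambda>_. borel :: (real^'n::finite) measure)) =
    sigma_sets (\<Pi>\<^sub>E i\<in>T. UNIV)
      {{f\<in>(\<Pi>\<^sub>E i\<in>T. UNIV). \<forall>i\<in>j. f i \<in> A i} | A j. j \<in> {T} \<and> A \<in> Pi j (\<lambda>_. range (\<lambda>(a, b). box a b :: (real^'n) set))}"
    (is "_ = sigma_sets ?\<Omega> ?P")
proof -
  have "sets (Pi\<^sub>M T (\<lambda>_. borel :: (real^'n::finite) measure)) =
      sets (Pi\<^sub>M T (\<lambda>_. sigma UNIV (range (\<lambda>(a, b). box a b :: (real^'n) set))))"
    by (simp only: borel_eq_box[symmetric])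
  also have "\<dots> = sets (sigma ?\<Omega> ?P)"
  proof (rule sets_PiM_sigma)
    fix i
    show "\<exists>S\<subseteq>range (\<lambda>(a, b). box a b :: (real^'n) set). countable S \<and> UNIV = \<Union>S"
    proof (intro exI conjI)
      let ?S = "range (\<lambda>n::nat. box (- (\<chi> j. real n)) (\<chi> j. real n) :: (real^'n) set)"
      show "?S \<subseteq> range (\<lambda>(a, b). box a b)" by auto
      show "countable ?S" by simp
      show "UNIV = \<Union>?S"
      proof (rule set_eqI, rule iffI)
        fix x :: "real^'n"
        obtain n :: nat where n: "(\<Sum>j\<in>UNIV. \<bar>x $ j\<bar>) < n" using reals_Archimedean2 by blast
        have "\<bar>x $ j\<bar> < n" for j
          using member_le_sum[of j UNIV "\<lambda>j. \<bar>x $ j\<bar>"] n by simp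
        then have "\<forall>j. - real n < x $ j \<and> x $ j < real n" by (metis abs_less_iff minus_less_iff)
        then have "x \<in> box (- (\<chi> j. real n)) (\<chi> j. real n)"
          by (simp add: mem_box_cart)
        then show "x \<in> \<Union>?S" by blast
      qed simp
    qed
  qed (use T in auto)
  also have "\<dots> = sigma_sets ?\<Omega> ?P"
    by (rule sets_measure_of) auto
  finally show ?thesis .
qed

lemma CW:
  assumes P: "prob_space P" "sets P = sets (Pi\<^sub>M T (\<lambda>_. borel :: (real^'n::finite) measure))"
    and Q: "prob_space Q" "sets Q = sets (Pi\<^sub>M T (\<lambda>_. borel :: (real^'n) measure))"
    and T: "finite T"
    and ch: "\<And>a. (\<integral>x. cis (\<Sum>t\<in>T. a t \<bullet> x t) \<partial>P) = (\<integral>x. cis (\<Sum>t\<in>T. a t \<bullet> x t) \<partial>Q)"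
  shows "P = Q"
proof -
  let ?\<Omega> = "(\<Pi>\<^sub>E i\<in>T. (UNIV :: (real^'n) set))"
  let ?E = "{{f\<in>?\<Omega>. \<forall>i\<in>j. f i \<in> A i} | A j. j \<in> {T} \<and> A \<in> Pi j (\<lambda>_. range (\<lambda>(a, b). box a b :: (real^'n) set))}"
  have spP: "space P = ?\<Omega>" using sets_eq_imp_space_eq[OF P(2)] by (simp add: space_PiM)
  have spQ: "space Q = ?\<Omega>" using sets_eq_imp_space_eq[OF Q(2)] by (simp add: space_PiM)
  have sE: "sets (Pi\<^sub>M T (\<lambda>_. borel :: (real^'n::finite) measure)) = sigma_sets ?\<Omega> ?E"
    by (rule sets_PiM_box[OF T])
  show ?thesis
  proof (rule measure_eqI_generator_eq[where E="?E" and \<Omega>="?\<Omega>"])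
    show "Int_stable ?E"
    proof (rule Int_stableI)
      fix X Y assume X: "X \<in> ?E" and Y: "Y \<in> ?E"
      from X obtain A where A: "X = {f\<in>?\<Omega>. \<forall>i\<in>T. f i \<in> A i}" "A \<in> Pi T (\<lambda>_. range (\<lambda>(a, b). box a b))" by force
      from Y obtain A' where A': "Y = {f\<in>?\<Omega>. \<forall>i\<in>T. f i \<in> A' i}" "A' \<in> Pi T (\<lambda>_. range (\<lambda>(a, b). box a b))" by force
      have "(\<lambda>i. A i \<inter> A' i) \<in> Pi T (\<lambda>_. range (\<lambda>(a, b). box a b :: (real^'n) set))"
      proof
        fix i assume "i \<in> T"
        then obtain a b a' b' where "A i = box a b" "A' i = box a' b'" using A(2) A'(2) by fastforce
        then show "A i \<inter> A' i \<in> range (\<lambda>(a, b). box a b)"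
          by (auto simp: box_Int_box)
      qed
      moreover have "X \<inter> Y = {f\<in>?\<Omega>. \<forall>i\<in>T. f i \<in> A i \<inter> A' i}" using A A' by auto
      ultimately show "X \<inter> Y \<in> ?E" by (intro CollectI exI[of _ "\<lambda>i. A i \<inter> A' i"] exI[of _ T]) simp
    qed
    show "?E \<subseteq> Pow ?\<Omega>" by auto
    show "sets P = sigma_sets ?\<Omega> ?E" using P(2) sE by simp
    show "sets Q = sigma_sets ?\<Omega> ?E" using Q(2) sE by simp
    define C where "C n = {f\<in>?\<Omega>. \<forall>i\<in>T. f i \<in> box (- (\<chi> j. real n)) (\<chi> j. real n)}" for n :: nat
    show "range C \<subseteq> ?E"
    proof
      fix X assume "X \<in> range C"
      then obtain n where "X = C n" by blast
      then show "X \<in> ?E" unfolding C_def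
        by (intro CollectI exI[of _ "\<lambda>_. box (- (\<chi> j. real n)) (\<chi> j. real n)"] exI[of _ T]) auto
    qed
    show "(\<Union>n. C n) = ?\<Omega>"
    proof (rule set_eqI, rule iffI)
      fix f assume f: "f \<in> ?\<Omega>"
      obtain n :: nat where n: "(\<Sum>t\<in>T. \<Sum>j\<in>UNIV. \<bar>f t $ j\<bar>) < n" using reals_Archimedean2 by blast
      have "\<bar>f t $ j\<bar> < n" if "t \<in> T" for t j
      proof -
        have "\<bar>f t $ j\<bar> \<le> (\<Sum>j\<in>UNIV. \<bar>f t $ j\<bar>)" by (rule member_le_sum) auto
        also have "\<dots> \<le> (\<Sum>t\<in>T. \<Sum>j\<in>UNIV. \<bar>f t $ j\<bar>)"
          using that T by (intro member_le_sum[of t T "\<lambda>t. \<Sum>j\<in>UNIV. \<bar>f t $ j\<bar>"] sum_nonneg) auto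
        finally show ?thesis using n by simp
      qed
      then have "\<forall>t\<in>T. \<forall>j. - real n < f t $ j \<and> f t $ j < real n" by (metis abs_less_iff minus_less_iff)
      then have "f \<in> C n" using f unfolding C_def by (simp add: mem_box_cart)
      then show "f \<in> (\<Union>n. C n)" by blast
    qed (auto simp: C_def)
    show "emeasure P (C n) \<noteq> \<infinity>" for n
      using finite_measure.emeasure_finite[OF prob_space.finite_measure[OF P(1)]] by simp
    fix X assume "X \<in> ?E"
    then obtain A where A: "X = {f\<in>?\<Omega>. \<forall>i\<in>T. f i \<in> A i}" "A \<in> Pi T (\<lambda>_. range (\<lambda>(a, b). box a b))" by force
    have "\<forall>i\<in>T. \<exists>p. A i = box (fst p) (snd p)" using A(2) by fastforce
    then obtain p where p: "\<And>i. i \<in> T \<Longrightarrow> A i = box (fst (p i)) (snd (p i))" by metis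
    define a where "a t j = fst (p t) $ j" for t j
    define b where "b t j = snd (p t) $ j" for t j
    have ind: "indicator X f = (\<Prod>i\<in>T\<times>UNIV. indicator {a (fst i) (snd i)<..<b (fst i) (snd i)} (f (fst i) $ snd i) :: real)"
      if "f \<in> ?\<Omega>" for f
    proof -
      have "f \<in> X \<longleftrightarrow> (\<forall>i\<in>T\<times>UNIV. f (fst i) $ snd i \<in> {a (fst i) (snd i)<..<b (fst i) (snd i)})"
        using that by (auto simp: A(1) p a_def b_def mem_box_cart)
      then show ?thesis
      proof (cases "f \<in> X")
        case True
        then have "(\<Prod>i\<in>T\<times>UNIV. indicator {a (fst i) (snd i)<..<b (fst i) (snd i)} (f (fst i) $ snd i) :: real) = 1"
          using \<open>f \<in> X \<longleftrightarrow> _\<close> by (intro prod.neutral) (auto simp: indicator_def)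
        then show ?thesis using True by simp
      next
        case False
        then obtain i where "i \<in> T\<times>UNIV" "f (fst i) $ snd i \<notin> {a (fst i) (snd i)<..<b (fst i) (snd i)}"
          using \<open>f \<in> X \<longleftrightarrow> _\<close> by blast
        then obtain t j where tj: "t \<in> T" "f t $ j \<notin> {a t j<..<b t j}"
          by (metis SigmaE fst_conv snd_conv)
        have "(\<Prod>i\<in>T\<times>UNIV. indicator {a (fst i) (snd i)<..<b (fst i) (snd i)} (f (fst i) $ snd i) :: real) = 0"
          using T tj by (intro prod_zero bexI[of _ "(t,j)"]) auto
        then show ?thesis using False by simp
      qed
    qed
    have "measure P X = (\<integral>x. indicator X x \<partial>P)" using spP by (simp add: A(1) Int_absorb2)
    also have "\<dots> = (\<integral>x. (\<Prod>i\<in>T\<times>UNIV. indicator {a (fst i) (snd i)<..<b (fst i) (snd i)} (x (fst i) $ snd i)) \<partial>P)"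
      by (intro Bochner_Integration.integral_cong refl) (use ind spP in auto)
    also have "\<dots> = (\<integral>x. (\<Prod>i\<in>T\<times>UNIV. indicator {a (fst i) (snd i)<..<b (fst i) (snd i)} (x (fst i) $ snd i)) \<partial>Q)"
      by (rule BOX[OF P Q T ch])
    also have "\<dots> = (\<integral>x. indicator X x \<partial>Q)"
      by (intro Bochner_Integration.integral_cong refl) (use ind spQ in auto)
    also have "\<dots> = measure Q X" using spQ by (simp add: A(1) Int_absorb2)
    finally show "emeasure P X = emeasure Q X"
      using prob_space.finite_measure[OF P(1)] prob_space.finite_measure[OF Q(1)]
      by (simp add: finite_measure.emeasure_eq_measure)
  qed
qed

definition gauss_law :: "real \<Rightarrow> real measure" where
  "gauss_law \<sigma> = (if \<sigma> = 0 then return borel 0 else density lborel (normal_density 0 \<sigma>))"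

lemma gauss_second_moment:
  assumes "\<sigma> \<ge> 0"
  shows "(\<integral>y. y^2 \<partial>gauss_law \<sigma>) = \<sigma>^2"
proof (cases "\<sigma> = 0")
  case True
  then show ?thesis by (simp add: gauss_law_def integral_return)
next
  case False
  then have s: "\<sigma> > 0" using assms by simp
  have "(\<integral>y. y^2 \<partial>gauss_law \<sigma>) = (\<integral>y. normal_density 0 \<sigma> y * y^2 \<partial>lborel)"
    using False by (simp add: gauss_law_def integral_density)
  also have "\<dots> = (\<integral>y. normal_density 0 \<sigma> y * (y - 0)^(2*1) \<partial>lborel)" by simp
  also have "\<dots> = fact (2 * 1) / ((2 / \<sigma>\<^sup>2)^1 * fact 1)"
    by (rule integral_normal_moment_even[OF s])
  also have "\<dots> = \<sigma>^2" using s by simp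
  finally show ?thesis .
qed

lemma meas_restr:
  assumes "\<And>t. U t \<in> borel_measurable M"
  shows "(\<lambda>\<omega>. \<lambda>t\<in>T. U t \<omega>) \<in> measurable M (Pi\<^sub>M T (\<lambda>_. borel :: ('b::topological_space) measure))"
  using assms by (intro measurable_restrict) auto

lemma GaussEq:
  fixes M :: "'w measure" and U V :: "'i \<Rightarrow> 'w \<Rightarrow> real^'n::finite"
  assumes M: "prob_space M"
    and mU: "\<And>t. U t \<in> borel_measurable M" and mV: "\<And>t. V t \<in> borel_measurable M"
    and gU: "\<And>T a. finite T \<Longrightarrow> \<exists>\<sigma>\<ge>0. distr M borel (\<lambda>\<omega>. \<Sum>t\<in>T. a t \<bullet> U t \<omega>) = gauss_law \<sigma>"
    and gV: "\<And>T a. finite T \<Longrightarrow> \<exists>\<sigma>\<ge>0. distr M borel (\<lambda>\<omega>. \<Sum>t\<in>T. a t \<bullet> V t \<omega>) = gauss_law \<sigma>"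
    and var: "\<And>T a. finite T \<Longrightarrow> (\<integral>\<omega>. (\<Sum>t\<in>T. a t \<bullet> U t \<omega>)^2 \<partial>M) = (\<integral>\<omega>. (\<Sum>t\<in>T. a t \<bullet> V t \<omega>)^2 \<partial>M)"
  shows "eq_law M U V"
  unfolding eq_law_def
proof (intro allI impI)
  fix T :: "'i set" assume T: "finite T"
  have sU: "(\<lambda>\<omega>. \<Sum>t\<in>T. a t \<bullet> U t \<omega>) \<in> borel_measurable M" for a
    using mU by (intro borel_measurable_sum borel_measurable_inner) auto
  have sV: "(\<lambda>\<omega>. \<Sum>t\<in>T. a t \<bullet> V t \<omega>) \<in> borel_measurable M" for a
    using mV by (intro borel_measurable_sum borel_measurable_inner) auto
  have dist_eq: "distr M borel (\<lambda>\<omega>. \<Sum>t\<in>T. a t \<bullet> U t \<omega>) = distr M borel (\<lambda>\<omega>. \<Sum>t\<in>T. a t \<bullet> V t \<omega>)" for a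
  proof -
    obtain \<sigma>1 where s1: "\<sigma>1 \<ge> 0" "distr M borel (\<lambda>\<omega>. \<Sum>t\<in>T. a t \<bullet> U t \<omega>) = gauss_law \<sigma>1"
      using gU[OF T] by blast
    obtain \<sigma>2 where s2: "\<sigma>2 \<ge> 0" "distr M borel (\<lambda>\<omega>. \<Sum>t\<in>T. a t \<bullet> V t \<omega>) = gauss_law \<sigma>2"
      using gV[OF T] by blast
    have "\<sigma>1^2 = (\<integral>y. y^2 \<partial>gauss_law \<sigma>1)" using gauss_second_moment[OF s1(1)] by simp
    also have "\<dots> = (\<integral>\<omega>. (\<Sum>t\<in>T. a t \<bullet> U t \<omega>)^2 \<partial>M)"
      unfolding s1(2)[symmetric] by (rule integral_distr[OF sU]) simp
    also have "\<dots> = (\<integral>\<omega>. (\<Sum>t\<in>T. a t \<bullet> V t \<omega>)^2 \<partial>M)" by (rule var[OF T])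
    also have "\<dots> = (\<integral>y. y^2 \<partial>gauss_law \<sigma>2)"
      unfolding s2(2)[symmetric] by (rule integral_distr[OF sV, symmetric]) simp
    also have "\<dots> = \<sigma>2^2" using gauss_second_moment[OF s2(1)] by simp
    finally have "\<sigma>1 = \<sigma>2" using s1(1) s2(1) by (simp add: power2_eq_iff_nonneg)
    then show ?thesis using s1 s2 by simp
  qed
  let ?P = "distr M (Pi\<^sub>M T (\<lambda>_. borel)) (\<lambda>\<omega>. \<lambda>t\<in>T. U t \<omega>)"
  let ?Q = "distr M (Pi\<^sub>M T (\<lambda>_. borel)) (\<lambda>\<omega>. \<lambda>t\<in>T. V t \<omega>)"
  have mrU: "(\<lambda>\<omega>. \<lambda>t\<in>T. U t \<omega>) \<in> measurable M (Pi\<^sub>M T (\<lambda>_. borel :: (real^'n) measure))"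
    by (rule meas_restr[OF mU])
  have mrV: "(\<lambda>\<omega>. \<lambda>t\<in>T. V t \<omega>) \<in> measurable M (Pi\<^sub>M T (\<lambda>_. borel :: (real^'n) measure))"
    by (rule meas_restr[OF mV])
  show "?P = ?Q"
  proof (rule CW)
    show "prob_space ?P" by (rule prob_space.prob_space_distr[OF M mrU])
    show "prob_space ?Q" by (rule prob_space.prob_space_distr[OF M mrV])
    show "sets ?P = sets (Pi\<^sub>M T (\<lambda>_. borel))" by simp
    show "sets ?Q = sets (Pi\<^sub>M T (\<lambda>_. borel))" by simp
    show "finite T" by (rule T)
    fix a :: "'i \<Rightarrow> real^'n"
    have mc: "(\<lambda>x. cis (\<Sum>t\<in>T. a t \<bullet> x t)) \<in> borel_measurable (Pi\<^sub>M T (\<lambda>_. borel :: (real^'n) measure))"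
      by (rule meas_cis[OF T refl])
    have cisb: "cis \<in> borel_measurable borel"
      by (intro borel_measurable_continuous_onI continuous_intros)
    have "(\<integral>x. cis (\<Sum>t\<in>T. a t \<bullet> x t) \<partial>?P) = (\<integral>\<omega>. cis (\<Sum>t\<in>T. a t \<bullet> U t \<omega>) \<partial>M)"
      using integral_distr[OF mrU mc] T by (simp cong: sum.cong)
    also have "\<dots> = (\<integral>y. cis y \<partial>distr M borel (\<lambda>\<omega>. \<Sum>t\<in>T. a t \<bullet> U t \<omega>))"
      by (rule integral_distr[OF sU cisb, symmetric])
    also have "\<dots> = (\<integral>y. cis y \<partial>distr M borel (\<lambda>\<omega>. \<Sum>t\<in>T. a t \<bullet> V t \<omega>))"
      by (simp only: dist_eq)
    also have "\<dots> = (\<integral>\<omega>. cis (\<Sum>t\<in>T. a t \<bullet> V t \<omega>) \<partial>M)"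
      by (rule integral_distr[OF sV cisb])
    also have "\<dots> = (\<integral>x. cis (\<Sum>t\<in>T. a t \<bullet> x t) \<partial>?Q)"
      using integral_distr[OF mrV mc] T by (simp cong: sum.cong)
    finally show "(\<integral>x. cis (\<Sum>t\<in>T. a t \<bullet> x t) \<partial>?P) = (\<integral>x. cis (\<Sum>t\<in>T. a t \<bullet> x t) \<partial>?Q)" .
  qed
qed

definition Cv :: "'w measure \<Rightarrow> ('i \<Rightarrow> 'w \<Rightarrow> real^'n) \<Rightarrow> 'i \<Rightarrow> 'i \<Rightarrow> real^'n^'n" where
  "Cv M X s t = (\<chi> j k. \<integral>\<omega>. X s \<omega> $ j * X t \<omega> $ k \<partial>M)"

lemma sq_expand:
  fixes X :: "'i \<Rightarrow> real^'n::finite"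
  shows "(\<Sum>t\<in>T. b t \<bullet> X t)^2 = (\<Sum>s\<in>T. \<Sum>t\<in>T. \<Sum>j\<in>UNIV. \<Sum>k\<in>UNIV. b s $ j * b t $ k * (X s $ j * X t $ k))"
proof -
  have "(\<Sum>t\<in>T. b t \<bullet> X t)^2 = (\<Sum>s\<in>T. b s \<bullet> X s) * (\<Sum>t\<in>T. b t \<bullet> X t)"
    by (simp add: power2_eq_square)
  also have "\<dots> = (\<Sum>s\<in>T. \<Sum>t\<in>T. (b s \<bullet> X s) * (b t \<bullet> X t))"
    by (simp add: sum_product)
  also have "\<dots> = (\<Sum>s\<in>T. \<Sum>t\<in>T. \<Sum>j\<in>UNIV. \<Sum>k\<in>UNIV. b s $ j * b t $ k * (X s $ j * X t $ k))"
    by (intro sum.cong refl) (simp add: inner_vec_def sum_product algebra_simps)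
  finally show ?thesis .
qed

lemma VarX:
  fixes X :: "'i \<Rightarrow> 'w \<Rightarrow> real^'n::finite"
  assumes integ: "\<And>s t j k. integrable M (\<lambda>\<omega>. X s \<omega> $ j * X t \<omega> $ k)"
  shows "(\<integral>\<omega>. (\<Sum>t\<in>T. b t \<bullet> X t \<omega>)^2 \<partial>M) = (\<Sum>s\<in>T. \<Sum>t\<in>T. b s \<bullet> (Cv M X s t *v b t))"
proof -
  have "(\<integral>\<omega>. (\<Sum>t\<in>T. b t \<bullet> X t \<omega>)^2 \<partial>M) =
      (\<integral>\<omega>. (\<Sum>s\<in>T. \<Sum>t\<in>T. \<Sum>j\<in>UNIV. \<Sum>k\<in>UNIV. b s $ j * b t $ k * (X s \<omega> $ j * X t \<omega> $ k)) \<partial>M)"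
    by (simp only: sq_expand)
  also have "\<dots> = (\<Sum>s\<in>T. \<Sum>t\<in>T. \<Sum>j\<in>UNIV. \<Sum>k\<in>UNIV. b s $ j * b t $ k * (\<integral>\<omega>. X s \<omega> $ j * X t \<omega> $ k \<partial>M))"
    using integ by (simp add: integrable_sum)
  also have "\<dots> = (\<Sum>s\<in>T. \<Sum>t\<in>T. b s \<bullet> (Cv M X s t *v b t))"
    by (intro sum.cong refl)
      (simp add: Cv_def inner_vec_def matrix_vector_mult_def sum_distrib_left algebra_simps)
  finally show ?thesis .
qed

lemma MT:
  fixes U V :: "'i \<Rightarrow> 'w \<Rightarrow> real^'n::finite"
  assumes "eq_law M U V" "\<And>t. U t \<in> borel_measurable M" "\<And>t. V t \<in> borel_measurable M"
  shows "(\<integral>\<omega>. U s \<omega> $ j * U t \<omega> $ k \<partial>M) = (\<integral>\<omega>. V s \<omega> $ j * V t \<omega> $ k \<partial>M)"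
proof -
  let ?T = "{s, t}"
  have e: "distr M (Pi\<^sub>M ?T (\<lambda>_. borel)) (\<lambda>\<omega>. \<lambda>u\<in>?T. U u \<omega>) = distr M (Pi\<^sub>M ?T (\<lambda>_. borel)) (\<lambda>\<omega>. \<lambda>u\<in>?T. V u \<omega>)"
    using assms(1) unfolding eq_law_def by simp
  have mh: "(\<lambda>x. x s $ j * x t $ k) \<in> borel_measurable (Pi\<^sub>M ?T (\<lambda>_. borel :: (real^'n) measure))"
  proof -
    have "(\<lambda>x. x s $ j) \<in> borel_measurable (Pi\<^sub>M ?T (\<lambda>_. borel :: (real^'n) measure))"
      using meas_coord[of s ?T "\<lambda>y. y"] by simp
    moreover have "(\<lambda>x. x t $ k) \<in> borel_measurable (Pi\<^sub>M ?T (\<lambda>_. borel :: (real^'n) measure))"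
      using meas_coord[of t ?T "\<lambda>y. y"] by simp
    ultimately show ?thesis by (rule borel_measurable_times)
  qed
  have "(\<integral>\<omega>. U s \<omega> $ j * U t \<omega> $ k \<partial>M) = (\<integral>x. x s $ j * x t $ k \<partial>distr M (Pi\<^sub>M ?T (\<lambda>_. borel)) (\<lambda>\<omega>. \<lambda>u\<in>?T. U u \<omega>))"
    using integral_distr[OF meas_restr[OF assms(2)] mh] by simp
  also have "\<dots> = (\<integral>x. x s $ j * x t $ k \<partial>distr M (Pi\<^sub>M ?T (\<lambda>_. borel)) (\<lambda>\<omega>. \<lambda>u\<in>?T. V u \<omega>))"
    by (simp only: e)
  also have "\<dots> = (\<integral>\<omega>. V s \<omega> $ j * V t \<omega> $ k \<partial>M)"
    using integral_distr[OF meas_restr[OF assms(3)] mh] by simp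
  finally show ?thesis .
qed

lemma CvB:
  fixes X :: "'i \<Rightarrow> 'w \<Rightarrow> real^'n::finite"
  assumes integ: "\<And>s t j k. integrable M (\<lambda>\<omega>. X s \<omega> $ j * X t \<omega> $ k)"
  shows "Cv M (\<lambda>t \<omega>. B *v X t \<omega>) s t = B ** Cv M X s t ** transpose B"
proof -
  have "(\<integral>\<omega>. (B *v X s \<omega>) $ j * (B *v X t \<omega>) $ k \<partial>M) = (B ** Cv M X s t ** transpose B) $ j $ k" for j k
  proof -
    have "(\<integral>\<omega>. (B *v X s \<omega>) $ j * (B *v X t \<omega>) $ k \<partial>M) =
        (\<integral>\<omega>. (\<Sum>l\<in>UNIV. \<Sum>m\<in>UNIV. B $ j $ l * B $ k $ m * (X s \<omega> $ l * X t \<omega> $ m)) \<partial>M)"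
      by (simp add: matrix_vector_mult_def sum_product algebra_simps)
    also have "\<dots> = (\<Sum>l\<in>UNIV. \<Sum>m\<in>UNIV. B $ j $ l * B $ k $ m * (\<integral>\<omega>. X s \<omega> $ l * X t \<omega> $ m \<partial>M))"
      using integ by (simp add: integrable_sum)
    also have "\<dots> = (B ** Cv M X s t ** transpose B) $ j $ k"
      by (simp add: Cv_def matrix_matrix_mult_def transpose_def sum_distrib_left sum_distrib_right algebra_simps)
        (rule sum.swap)
    finally show ?thesis .
  qed
  then show ?thesis by (simp add: Cv_def vec_eq_iff)
qed

lemma cnj_kernel: "cnj (spec_kernel a b x) = spec_kernel (-a) (-b) x"
  by (simp add: spec_kernel_def cis_cnj inner_minus_left)

lemma spec_sym:
  fixes X :: "real^'m \<Rightarrow> 'w \<Rightarrow> real^'n::finite"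
  assumes "spectral_rep M X \<mu> g"
  shows "(\<integral>\<omega>. X a \<omega> $ j * X b \<omega> $ k \<partial>M) = (\<integral>\<omega>. X (-b) \<omega> $ j * X (-a) \<omega> $ k \<partial>M)"
proof -
  have rep: "\<And>s t j k. complex_of_real (\<integral>\<omega>. X s \<omega> $ j * X t \<omega> $ k \<partial>M) = (\<integral>x. spec_kernel s t x * g x $ j $ k \<partial>\<mu>)"
    and herm: "\<And>x. herm_psd (g x)"
    using assms unfolding spectral_rep_def by auto
  have hg: "cnj (g x $ j $ k) = g x $ k $ j" for x
    using herm[of x] unfolding herm_psd_def by (metis complex_cnj_cnj)
  have "complex_of_real (\<integral>\<omega>. X a \<omega> $ j * X b \<omega> $ k \<partial>M) = cnj (complex_of_real (\<integral>\<omega>. X a \<omega> $ j * X b \<omega> $ k \<partial>M))"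
    by simp
  also have "\<dots> = cnj (\<integral>x. spec_kernel a b x * g x $ j $ k \<partial>\<mu>)" by (simp only: rep)
  also have "\<dots> = (\<integral>x. cnj (spec_kernel a b x * g x $ j $ k) \<partial>\<mu>)" by (simp only: Bochner_Integration.integral_cnj)
  also have "\<dots> = (\<integral>x. spec_kernel (-a) (-b) x * g x $ k $ j \<partial>\<mu>)"
    by (simp only: complex_cnj_mult cnj_kernel hg)
  also have "\<dots> = complex_of_real (\<integral>\<omega>. X (-a) \<omega> $ k * X (-b) \<omega> $ j \<partial>M)" by (simp only: rep)
  finally show ?thesis by (simp add: mult.commute)
qed

lemma gauss_inst:
  assumes "centered_gaussian_field M X" "finite T"
  shows "\<exists>\<sigma>\<ge>0. distr M borel (\<lambda>\<omega>. \<Sum>t\<in>T. a t \<bullet> X t \<omega>) = gauss_law \<sigma>"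
  using assms unfolding centered_gaussian_field_def gauss_law_def by blast

lemma GaussRev:
  fixes X :: "real^'m \<Rightarrow> 'w \<Rightarrow> real^'n::finite"
  assumes M: "prob_space M" and G: "centered_gaussian_field M X"
    and integ: "\<And>s t j k. integrable M (\<lambda>\<omega>. X s \<omega> $ j * X t \<omega> $ k)"
    and C: "\<And>s t. Cv M X (-s) (-t) = Cv M X s t"
  shows "eq_law M (\<lambda>t. X (-t)) X"
proof (rule GaussEq[OF M])
  have mX: "\<And>t. X t \<in> borel_measurable M" using G unfolding centered_gaussian_field_def by blast
  show "\<And>t. X (-t) \<in> borel_measurable M" "\<And>t. X t \<in> borel_measurable M" using mX by auto
  show "\<exists>\<sigma>\<ge>0. distr M borel (\<lambda>\<omega>. \<Sum>t\<in>T. a t \<bullet> X t \<omega>) = gauss_law \<sigma>" if "finite T" for T a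
    by (rule gauss_inst[OF G that])
  show "\<exists>\<sigma>\<ge>0. distr M borel (\<lambda>\<omega>. \<Sum>t\<in>T. a t \<bullet> X (-t) \<omega>) = gauss_law \<sigma>" if "finite T" for T a
  proof -
    have "(\<lambda>\<omega>. \<Sum>t\<in>T. a t \<bullet> X (-t) \<omega>) = (\<lambda>\<omega>. \<Sum>t\<in>uminus ` T. a (-t) \<bullet> X t \<omega>)"
      by (subst sum.reindex) (auto simp: inj_on_def)
    then show ?thesis using gauss_inst[OF G finite_imageI[OF that], of "\<lambda>t. a (-t)"] by simp
  qed
  show "(\<integral>\<omega>. (\<Sum>t\<in>T. a t \<bullet> X (-t) \<omega>)^2 \<partial>M) = (\<integral>\<omega>. (\<Sum>t\<in>T. a t \<bullet> X t \<omega>)^2 \<partial>M)" if "finite T" for T a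
  proof -
    have "(\<integral>\<omega>. (\<Sum>t\<in>T. a t \<bullet> X (-t) \<omega>)^2 \<partial>M) = (\<Sum>s\<in>T. \<Sum>t\<in>T. a s \<bullet> (Cv M (\<lambda>t. X (-t)) s t *v a t))"
      by (rule VarX) (rule integ)
    also have "\<dots> = (\<Sum>s\<in>T. \<Sum>t\<in>T. a s \<bullet> (Cv M X s t *v a t))"
      using C by (simp add: Cv_def)
    also have "\<dots> = (\<integral>\<omega>. (\<Sum>t\<in>T. a t \<bullet> X t \<omega>)^2 \<partial>M)"
      by (rule VarX[symmetric]) (rule integ)
    finally show ?thesis .
  qed
qed

lemma dot_transpose: "(transpose S *v a) \<bullet> x = a \<bullet> ((S :: real^'n^'n) *v x)"
  by (simp add: dot_lmul_matrix)

lemma GaussMat: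
  fixes X :: "real^'m \<Rightarrow> 'w \<Rightarrow> real^'n::finite"
  assumes M: "prob_space M" and G: "centered_gaussian_field M X"
    and integ: "\<And>s t j k. integrable M (\<lambda>\<omega>. X s \<omega> $ j * X t \<omega> $ k)"
    and C: "\<And>s t. S ** Cv M X s t ** transpose S = Cv M X s t"
  shows "eq_law M (\<lambda>t \<omega>. S *v X t \<omega>) X"
proof (rule GaussEq[OF M])
  have mX: "\<And>t. X t \<in> borel_measurable M" using G unfolding centered_gaussian_field_def by blast
  show "\<And>t. X t \<in> borel_measurable M" using mX by auto
  show "\<And>t. (\<lambda>\<omega>. S *v X t \<omega>) \<in> borel_measurable M"
  proof -
    fix t
    have "(\<lambda>v. S *v v) \<in> borel_measurable borel"
      by (intro borel_measurable_continuous_onI linear_continuous_on matrix_vector_mul_bounded_linear)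
    then show "(\<lambda>\<omega>. S *v X t \<omega>) \<in> borel_measurable M"
      using measurable_compose[OF mX[of t]] by blast
  qed
  have re: "(\<Sum>t\<in>T. a t \<bullet> (S *v X t \<omega>)) = (\<Sum>t\<in>T. (transpose S *v a t) \<bullet> X t \<omega>)" for T a \<omega>
    by (simp only: dot_transpose)
  show "\<exists>\<sigma>\<ge>0. distr M borel (\<lambda>\<omega>. \<Sum>t\<in>T. a t \<bullet> X t \<omega>) = gauss_law \<sigma>" if "finite T" for T a
    by (rule gauss_inst[OF G that])
  show "\<exists>\<sigma>\<ge>0. distr M borel (\<lambda>\<omega>. \<Sum>t\<in>T. a t \<bullet> (S *v X t \<omega>)) = gauss_law \<sigma>" if "finite T" for T a
    unfolding re by (rule gauss_inst[OF G that])
  show "(\<integral>\<omega>. (\<Sum>t\<in>T. a t \<bullet> (S *v X t \<omega>))^2 \<partial>M) = (\<integral>\<omega>. (\<Sum>t\<in>T. a t \<bullet> X t \<omega>)^2 \<partial>M)" if "finite T" for T a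
  proof -
    have "(\<integral>\<omega>. (\<Sum>t\<in>T. a t \<bullet> (S *v X t \<omega>))^2 \<partial>M) = (\<Sum>s\<in>T. \<Sum>t\<in>T. (transpose S *v a s) \<bullet> (Cv M X s t *v (transpose S *v a t)))"
      unfolding re by (rule VarX) (rule integ)
    also have "\<dots> = (\<Sum>s\<in>T. \<Sum>t\<in>T. a s \<bullet> ((S ** Cv M X s t ** transpose S) *v a t))"
      by (simp only: dot_transpose matrix_vector_mul_assoc matrix_mul_assoc)
    also have "\<dots> = (\<Sum>s\<in>T. \<Sum>t\<in>T. a s \<bullet> (Cv M X s t *v a t))"
      using C by simp
    also have "\<dots> = (\<integral>\<omega>. (\<Sum>t\<in>T. a t \<bullet> X t \<omega>)^2 \<partial>M)"
      by (rule VarX[symmetric]) (rule integ)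
    finally show ?thesis .
  qed
qed

lemma inv_props:
  fixes W :: "real^'n^'n"
  assumes "invertible W"
  shows "W ** matrix_inv W = mat 1" "matrix_inv W ** W = mat 1"
proof -
  have "\<exists>A'. W ** A' = mat 1 \<and> A' ** W = mat 1" using assms unfolding invertible_def by blast
  then have "W ** matrix_inv W = mat 1 \<and> matrix_inv W ** W = mat 1"
    unfolding matrix_inv_def by (rule someI_ex)
  then show "W ** matrix_inv W = mat 1" "matrix_inv W ** W = mat 1" by auto
qed

lemma spd_invertible:
  fixes W :: "real^'n^'n"
  assumes "sym_posdef W"
  shows "invertible W"
proof -
  have "inj ((*v) W)"
  proof (rule injI)
    fix x y assume "W *v x = W *v y"
    then have "W *v (x - y) = 0" by (simp add: matrix_vector_mult_diff_distrib)
    then have "(x - y) \<bullet> (W *v (x - y)) = 0" by simp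
    then show "x = y" using assms unfolding sym_posdef_def
      by (metis eq_iff_diff_eq_0 less_irrefl)
  qed
  then show ?thesis
    using matrix_left_invertible_injective invertible_left_inverse by blast
qed

lemma transpose_inv_sym:
  fixes W :: "real^'n^'n"
  assumes "transpose W = W" "invertible W"
  shows "transpose (matrix_inv W) = matrix_inv W"
proof -
  have "transpose (matrix_inv W) ** W = mat 1"
    using inv_props(1)[OF assms(2)] assms(1) by (metis matrix_transpose_mul transpose_mat)
  then have "transpose (matrix_inv W) = transpose (matrix_inv W) ** (W ** matrix_inv W)"
    using inv_props(1)[OF assms(2)] by simp
  also have "\<dots> = matrix_inv W"
    by (simp add: matrix_mul_assoc \<open>transpose (matrix_inv W) ** W = mat 1\<close>)
  finally show ?thesis .
qed

lemma conj_cov: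
  fixes W Mx C :: "real^'n^'n"
  assumes "transpose W = W" "invertible W"
  shows "(W ** Mx ** matrix_inv W) ** C ** transpose (W ** Mx ** matrix_inv W)
       = W ** (Mx ** (matrix_inv W ** C ** matrix_inv W) ** transpose Mx) ** W"
    and "C = W ** (matrix_inv W ** C ** matrix_inv W) ** W"
proof -
  have t: "transpose (W ** Mx ** matrix_inv W) = matrix_inv W ** transpose Mx ** W"
    using assms transpose_inv_sym[OF assms] by (simp add: matrix_transpose_mul matrix_mul_assoc)
  show "(W ** Mx ** matrix_inv W) ** C ** transpose (W ** Mx ** matrix_inv W)
       = W ** (Mx ** (matrix_inv W ** C ** matrix_inv W) ** transpose Mx) ** W"
    unfolding t by (simp add: matrix_mul_assoc)
  have "W ** (matrix_inv W ** C ** matrix_inv W) ** W = (W ** matrix_inv W) ** C ** (matrix_inv W ** W)"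
    by (simp add: matrix_mul_assoc)
  then show "C = W ** (matrix_inv W ** C ** matrix_inv W) ** W"
    using inv_props[OF assms(2)] by simp
qed

lemma cancelW:
  fixes W A B :: "real^'n^'n"
  assumes "invertible W" "W ** A ** W = W ** B ** W"
  shows "A = B"
proof -
  have "matrix_inv W ** (W ** A ** W) ** matrix_inv W = matrix_inv W ** (W ** B ** W) ** matrix_inv W"
    using assms(2) by simp
  moreover have "matrix_inv W ** (W ** X ** W) ** matrix_inv W = (matrix_inv W ** W) ** X ** (W ** matrix_inv W)" for X
    by (simp only: matrix_mul_assoc)
  ultimately show ?thesis using inv_props[OF assms(1)] by simp
qed

lemma conj_cancel:
  fixes W A B :: "real^'n^'n"
  assumes "invertible W" "W ** A ** matrix_inv W = W ** B ** matrix_inv W"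
  shows "A = B"
proof -
  have "matrix_inv W ** (W ** A ** matrix_inv W) ** W = matrix_inv W ** (W ** B ** matrix_inv W) ** W"
    using assms(2) by simp
  moreover have "matrix_inv W ** (W ** X ** matrix_inv W) ** W = (matrix_inv W ** W) ** X ** (matrix_inv W ** W)" for X
    by (simp only: matrix_mul_assoc)
  ultimately show ?thesis using inv_props[OF assms(1)] by simp
qed

definition R0 :: "real^2^2" where
  "R0 = (\<chi> i j. if i = 1 then (if j = 1 then 0 else -1) else (if j = 1 then 1 else 0))"

abbreviation "DD \<equiv> diag2 1 (-1)"

lemma one_neq_two2: "(1::2) \<noteq> 2" by simp

lemma mm2: "((A::real^2^2) ** B) $ i $ j = A $ i $ 1 * B $ 1 $ j + A $ i $ 2 * B $ 2 $ j"
  by (simp add: matrix_matrix_mult_def sum_2)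

lemma tr2: "transpose (A::real^2^2) $ i $ j = A $ j $ i"
  by (simp add: transpose_def)

lemma DD_entries: "DD $ 1 $ 1 = 1" "DD $ 1 $ 2 = 0" "DD $ 2 $ 1 = 0" "DD $ 2 $ 2 = -1"
  by (simp_all add: diag2_def)

lemma R0_entries: "R0 $ 1 $ 1 = 0" "R0 $ 1 $ 2 = -1" "R0 $ 2 $ 1 = 1" "R0 $ 2 $ 2 = 0"
  by (simp_all add: R0_def)

lemma mat1_entries: "(mat 1 :: real^2^2) $ 1 $ 1 = 1" "(mat 1 :: real^2^2) $ 1 $ 2 = 0"
  "(mat 1 :: real^2^2) $ 2 $ 1 = 0" "(mat 1 :: real^2^2) $ 2 $ 2 = 1"
  by (simp_all add: mat_def)

lemma eq2: "(A::real^2^2) = B \<longleftrightarrow> A$1$1 = B$1$1 \<and> A$1$2 = B$1$2 \<and> A$2$1 = B$2$1 \<and> A$2$2 = B$2$2"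
  by (auto simp: vec_eq_iff forall_2)


lemmas e2 = mm2 tr2 DD_entries R0_entries mat1_entries

lemma DD_in: "DD \<in> D2" "DD \<in> O2" "det DD = -1" "DD ** DD = mat 1"
proof -
  show "DD \<in> D2" by (simp add: D2_def)
  show "det DD = -1" by (simp add: det_2 DD_entries)
  show "DD ** DD = mat 1" by (simp only: eq2 e2) simp
  then show "DD \<in> O2" unfolding O2_def mem_Collect_eq by (simp only: eq2 e2)
qed

lemma R0_in: "R0 \<in> SO2"
proof -
  have "transpose R0 ** R0 = mat 1" by (simp only: eq2 e2) simp
  moreover have "det R0 = 1" by (simp add: det_2 R0_entries)
  ultimately show ?thesis by (simp add: SO2_def)
qed

lemma L1:
  fixes Y :: "real^2^2"
  assumes "DD ** Y ** transpose DD = Y"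
  shows "transpose Y = Y"
proof -
  have "(DD ** Y ** transpose DD) $ 1 $ 2 = Y $ 1 $ 2" "(DD ** Y ** transpose DD) $ 2 $ 1 = Y $ 2 $ 1"
    using assms by simp_all
  then have "Y $ 1 $ 2 = 0" "Y $ 2 $ 1 = 0"
    by (simp_all add: e2)
  then show ?thesis by (simp only: eq2 tr2)
qed

lemma L2:
  fixes Y :: "real^2^2"
  assumes "transpose Y = Y" "R0 ** Y ** transpose R0 = Y"
  shows "DD ** Y ** transpose DD = Y"
proof -
  have s: "Y $ 1 $ 2 = Y $ 2 $ 1" using assms(1) by (metis tr2)
  have "(R0 ** Y ** transpose R0) $ 1 $ 2 = Y $ 1 $ 2" "(R0 ** Y ** transpose R0) $ 1 $ 1 = Y $ 1 $ 1"
    using assms(2) by simp_all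
  then have "- Y $ 2 $ 1 = Y $ 1 $ 2" "Y $ 2 $ 2 = Y $ 1 $ 1"
    by (simp_all add: e2)
  then have "Y $ 1 $ 2 = 0" "Y $ 2 $ 1 = 0" using s by simp_all
  then show ?thesis by (simp only: eq2 e2) simp
qed

lemma neg_mv: "(- A :: real^'n^'m) *v x = - (A *v x)"
  by (simp add: matrix_vector_mult_def vec_eq_iff sum_negf)

lemma neg_mm: "(- A :: real^'n^'m) ** B = - (A ** B)" "A ** (- B) = - (A ** (B :: real^'k^'n))"
  by (simp_all add: matrix_matrix_mult_def vec_eq_iff sum_negf)

lemma neg_mat_vec: "(- mat 1 :: real^'n^'n) *v t = - t"
  by (simp add: neg_mv)

lemma neg_mat_inv: "invertible (- mat 1 :: real^'n^'n)"
  unfolding invertible_def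
  by (rule exI[of _ "- mat 1"]) (simp add: neg_mm)

theorem lemmaA3:
  fixes M :: "'w measure" and X :: "real^'m \<Rightarrow> 'w \<Rightarrow> real^2"
    and E :: "real^'m^'m" and H :: "real^2^2"
  assumes "OFBF M X E H"
    and "standing_eig_assumption E H"
    and "\<exists>\<mu> g. spectral_rep M X \<mu> g \<and> cond_NS \<mu> g"
  shows "(conj_to (Gran M X) D2 \<longrightarrow> - mat 1 \<in> Gdom M X)
       \<and> (conj_to (Gran M X) SO2 \<longrightarrow> - mat 1 \<notin> Gdom M X)
       \<and> (conj_to (Gran M X) O2 \<longrightarrow> - mat 1 \<in> Gdom M X)"
proof -
  have M: "prob_space M" and G: "centered_gaussian_field M X"
    using assms(1) unfolding OFBF_def by auto
  obtain \<mu> g where SR: "spectral_rep M X \<mu> g" using assms(3) by blast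
  have integ: "\<And>s t j k. integrable M (\<lambda>\<omega>. X s \<omega> $ j * X t \<omega> $ k)"
    using SR unfolding spectral_rep_def by blast
  have mX: "\<And>t. X t \<in> borel_measurable M" using G unfolding centered_gaussian_field_def by blast
  have measB: "(\<lambda>\<omega>. B *v X t \<omega>) \<in> borel_measurable M" for B :: "real^2^2" and t
  proof -
    have "(\<lambda>v. B *v v) \<in> borel_measurable borel"
      by (intro borel_measurable_continuous_onI linear_continuous_on matrix_vector_mul_bounded_linear)
    then show ?thesis using measurable_compose[OF mX[of t]] by blast
  qed
  define C where "C s t = Cv M X s t" for s t
  have Crev: "C (-s) (-t) = transpose (C s t)" for s t
  proof -
    have "(\<integral>\<omega>. X (-s) \<omega> $ j * X (-t) \<omega> $ k \<partial>M) = (\<integral>\<omega>. X s \<omega> $ k * X t \<omega> $ j \<partial>M)" for j k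
      using spec_sym[OF SR, where a=t and b=s and j=j and k=k] by (simp add: mult.commute)
    then show ?thesis by (simp add: C_def Cv_def vec_eq_iff transpose_def)
  qed
  have Gran_cov: "B ** C s t ** transpose B = C s t" if "B \<in> Gran M X" for B s t
  proof -
    have el: "eq_law M (\<lambda>t \<omega>. B *v X t \<omega>) X" using that unfolding Gran_def by blast
    have "Cv M (\<lambda>t \<omega>. B *v X t \<omega>) s t = Cv M X s t"
      unfolding Cv_def vec_eq_iff
      using MT[OF el measB mX] by simp
    then show ?thesis unfolding C_def using CvB[OF integ, where B=B and s=s and t=t] by simp
  qed
  have symgood: "- mat 1 \<in> Gdom M X" if sym: "\<And>s t. transpose (C s t) = C s t"
  proof -
    have "Cv M X (-s) (-t) = Cv M X s t" for s t using Crev sym unfolding C_def by simp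
    then have "eq_law M (\<lambda>t. X (-t)) X" by (rule GaussRev[OF M G integ])
    then show ?thesis unfolding Gdom_def by (simp add: neg_mat_vec neg_mat_inv)
  qed
  have Wfacts: "transpose W = W" "invertible W" if "sym_posdef W" for W :: "real^2^2"
    using that spd_invertible unfolding sym_posdef_def by auto
  have fromD: "\<forall>s t. transpose (C s t) = C s t" if cj: "conj_to (Gran M X) S" and D: "DD \<in> S" for S
  proof (intro allI)
    fix s t
    obtain W where W: "sym_posdef W" "Gran M X = (\<lambda>Q. W ** Q ** matrix_inv W) ` S"
      using cj unfolding conj_to_def by blast
    note Wf = Wfacts[OF W(1)]
    define Y where "Y = matrix_inv W ** C s t ** matrix_inv W"
    have "W ** DD ** matrix_inv W \<in> Gran M X" using W(2) D by blast
    from Gran_cov[OF this, of s t]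
    have "W ** (DD ** Y ** transpose DD) ** W = C s t"
      unfolding Y_def using conj_cov(1)[OF Wf, of DD "C s t"] by simp
    then have "W ** (DD ** Y ** transpose DD) ** W = W ** Y ** W"
      using conj_cov(2)[OF Wf, of "C s t"] unfolding Y_def by (rule trans)
    then have "DD ** Y ** transpose DD = Y" by (rule cancelW[OF Wf(2)])
    then have tY: "transpose Y = Y" by (rule L1)
    have "C s t = W ** Y ** W" unfolding Y_def by (rule conj_cov(2)[OF Wf])
    moreover have "transpose (W ** Y ** W) = W ** Y ** W"
      using tY Wf(1) by (simp add: matrix_transpose_mul matrix_mul_assoc)
    ultimately show "transpose (C s t) = C s t" by simp
  qed
  have part2: "- mat 1 \<notin> Gdom M X" if cj: "conj_to (Gran M X) SO2"
  proof
    assume "- mat 1 \<in> Gdom M X"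
    then have el: "eq_law M (\<lambda>t. X (-t)) X" unfolding Gdom_def by (simp add: neg_mat_vec)
    have "Cv M (\<lambda>t. X (-t)) s t = Cv M X s t" for s t
      unfolding Cv_def vec_eq_iff using MT[OF el mX mX] by simp
    then have "C (-s) (-t) = C s t" for s t by (simp add: C_def Cv_def)
    then have symC: "transpose (C s t) = C s t" for s t using Crev by metis
    obtain W where W: "sym_posdef W" "Gran M X = (\<lambda>Q. W ** Q ** matrix_inv W) ` SO2"
      using cj unfolding conj_to_def by blast
    note Wf = Wfacts[OF W(1)]
    note tWi = transpose_inv_sym[OF Wf]
    define B where "B = W ** DD ** matrix_inv W"
    have BC: "B ** C s t ** transpose B = C s t" for s t
    proof -
      define Y where "Y = matrix_inv W ** C s t ** matrix_inv W"
      have tY: "transpose Y = Y"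
        unfolding Y_def using symC[of s t] tWi by (simp add: matrix_transpose_mul matrix_mul_assoc)
      have "W ** R0 ** matrix_inv W \<in> Gran M X" using W(2) R0_in by blast
      from Gran_cov[OF this, of s t]
      have "W ** (R0 ** Y ** transpose R0) ** W = C s t"
        unfolding Y_def using conj_cov(1)[OF Wf, of R0 "C s t"] by simp
      then have "W ** (R0 ** Y ** transpose R0) ** W = W ** Y ** W"
        using conj_cov(2)[OF Wf, of "C s t"] unfolding Y_def by (rule trans)
      then have "R0 ** Y ** transpose R0 = Y" by (rule cancelW[OF Wf(2)])
      then have "DD ** Y ** transpose DD = Y" by (rule L2[OF tY])
      then have "B ** C s t ** transpose B = W ** Y ** W"
        unfolding B_def Y_def using conj_cov(1)[OF Wf, of DD "C s t"] by simp
      also have "\<dots> = C s t" unfolding Y_def by (rule conj_cov(2)[OF Wf, symmetric])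
      finally show ?thesis .
    qed
    have "eq_law M (\<lambda>t \<omega>. B *v X t \<omega>) X"
      by (rule GaussMat[OF M G integ]) (simp add: BC[unfolded C_def])
    moreover have "invertible B"
    proof -
      have "B ** B = W ** (DD ** (matrix_inv W ** W) ** DD) ** matrix_inv W"
        unfolding B_def by (simp add: matrix_mul_assoc)
      also have "\<dots> = mat 1" using inv_props[OF Wf(2)] DD_in(4) by simp
      finally show ?thesis unfolding invertible_def by blast
    qed
    ultimately have "B \<in> Gran M X" unfolding Gran_def by blast
    then obtain R where R: "R \<in> SO2" "W ** DD ** matrix_inv W = W ** R ** matrix_inv W"
      using W(2) unfolding B_def by blast
    have "DD = R" by (rule conj_cancel[OF Wf(2) R(2)])
    then have "det DD = 1" using R(1) unfolding SO2_def by simp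
    then show False using DD_in(3) by simp
  qed
  show ?thesis
  proof (intro conjI impI)
    assume "conj_to (Gran M X) D2"
    then show "- mat 1 \<in> Gdom M X" using fromD[OF _ DD_in(1)] symgood by blast
  next
    assume "conj_to (Gran M X) SO2"
    then show "- mat 1 \<notin> Gdom M X" by (rule part2)
  next
    assume "conj_to (Gran M X) O2"
    then show "- mat 1 \<in> Gdom M X" using fromD[OF _ DD_in(2)] symgood by blast
  qed
qed

end
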